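(* Let $s\ge2$ be an integer. For a positive integer $M$ let $n_k=\lfloor M\sin^2(k\pi/(2s))\rfloor$ for $k=0,\dots,s$. Then there exists $M_0$ such that for all integers $M\ge M_0$: (i) $n_0<n_1<\dots<n_s$ with $n_{k+1}-n_k\ge3$ for all $k$; (ii) the linear system in $x\in\mathbb{R}^{s+1}$ given by $\sum_{k=0}^s(-1)^kx_kn_k^i=0$ for $1\le i\le s-1$, $\sum_{k=0}^s(-1)^kx_k=0$, $\sum_{k=0}^sx_k=2$, has a unique solution, all of whose entries are positive, and $x_k\to\frac2s-\frac1s\delta_{k0}-\frac1s\delta_{ks}$ as $M\to\infty$; (iii) with $\tilde c_k=\sqrt{x_k}$, the vectors $|0_L\rangle=\sum_{k\text{ even}}\tilde c_k|n_k\rangle$ and $|1_L\rangle=\sum_{k\text{ odd}}\tilde c_k|n_k\rangle$ (sums over $0\le k\le s$) are orthonormal, and $P=|0_L\rangle\langle0_L|+|1_L\rangle\langle1_L|$ satisfies $PSP\in\mathbb{R}P$ for all $S\in\mathfrak S_s$; (iv) $\langle0_L|(a^\dagger a)^s|1_L\rangle=0$ and $\big(\langle0_L|(a^\dagger a)^s|0_L\rangle-\langle1_L|(a^\dagger a)^s|1_L\rangle\big)\big/\big((-1)^sM^s4^{1-s}\big)\to1$ as $M\to\infty$. Furthermore, for every $M\ge1$, $2\min_{S\in\mathfrak S_s}\|(a^\dagger a)^s-S\|\le4(M/4)^s$ (operator norm). Consequently the quantum Fisher information $t^2(\langle0_L|(a^\dagger a)^s|0_L\rangle-\langle1_L|(a^\dagger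 a)^s|1_L\rangle)^2$ of this code divided by $4t^2\min_{S\in\mathfrak S_s}\|(a^\dagger a)^s-S\|^2$ tends to $1$ as $M\to\infty$, and both are asymptotic to $16t^2(M/4)^{2s}$.
   Context: Truncated bosonic mode: the Hilbert space is $\mathrm{span}\{|0\rangle,\dots,|M\rangle\}$ with orthonormal Fock states $|m\rangle$, and $a|m\rangle=\sqrt m|m-1\rangle$ ($a|0\rangle=0$), so $a^\dagger a|m\rangle=m|m\rangle$. $\mathfrak S_s$ is the real span of the Hermitian operators $I$, $a+a^\dagger$, $i(a-a^\dagger)$, and $(a^\dagger a)^i$ for $1\le i\le s-1$. $\lfloor x\rfloor$ is the largest integer $\le x$. *)

theory Defs
  imports "HOL-Analysis.Analysis" "HOL-Library.Landau_Symbols"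
begin

text \<open>Truncated bosonic mode with Fock basis |0>,...,|M>.  Vectors are
functions nat => complex (only coordinates 0..M matter), operators are
matrices nat => nat => complex (only entries with indices 0..M matter).\<close>

type_synonym fvec = "nat \<Rightarrow> complex"
type_synonym fop = "nat \<Rightarrow> nat \<Rightarrow> complex"

definition fock :: "nat \<Rightarrow> fvec" where
  "fock n = (\<lambda>m. if m = n then 1 else 0)"

text \<open>annihilation operator: a|m> = sqrt m |m-1>, i.e. <i|a|j> = sqrt j if i = j-1\<close>
definition ann :: "nat \<Rightarrow> fop" where
  "ann M = (\<lambda>i j. if 1 \<le> j \<and> j \<le> M \<and> i = j - 1 then complex_of_real (sqrt (real j)) else 0)"

definition adj :: "fop \<Rightarrow> fop" where
  "adj A = (\<lambda>i j. cnj (A j i))"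

definition idop :: "nat \<Rightarrow> fop" where
  "idop M = (\<lambda>i j. if i = j \<and> i \<le> M then 1 else 0)"

definition mmul :: "nat \<Rightarrow> fop \<Rightarrow> fop \<Rightarrow> fop" where
  "mmul M A B = (\<lambda>i j. \<Sum>k\<le>M. A i k * B k j)"

fun mpow :: "nat \<Rightarrow> fop \<Rightarrow> nat \<Rightarrow> fop" where
  "mpow M A 0 = idop M"
| "mpow M A (Suc n) = mmul M A (mpow M A n)"

definition numop :: "nat \<Rightarrow> fop" where
  "numop M = mmul M (adj (ann M)) (ann M)"

definition mvec :: "nat \<Rightarrow> fop \<Rightarrow> fvec \<Rightarrow> fvec" where
  "mvec M A v = (\<lambda>i. \<Sum>j\<le>M. A i j * v j)"

definition finner :: "nat \<Rightarrow> fvec \<Rightarrow> fvec \<Rightarrow> complex" where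
  "finner M u v = (\<Sum>m\<le>M. cnj (u m) * v m)"

definition fnorm :: "nat \<Rightarrow> fvec \<Rightarrow> real" where
  "fnorm M v = sqrt (\<Sum>m\<le>M. (cmod (v m))\<^sup>2)"

definition opnorm :: "nat \<Rightarrow> fop \<Rightarrow> real" where
  "opnorm M A = Sup {fnorm M (mvec M A v) | v. fnorm M v \<le> 1}"

definition melem :: "nat \<Rightarrow> fvec \<Rightarrow> fop \<Rightarrow> fvec \<Rightarrow> complex" where
  "melem M u A v = finner M u (mvec M A v)"

definition outer :: "fvec \<Rightarrow> fvec \<Rightarrow> fop" where
  "outer u v = (\<lambda>i j. u i * cnj (v j))"

definition frakS :: "nat \<Rightarrow> nat \<Rightarrow> fop set" where
  "frakS M s = {S. \<exists>(r0::real) (r1::real) (r2::real) (c::nat \<Rightarrow> real).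
     S = (\<lambda>i j. complex_of_real r0 * idop M i j
              + complex_of_real r1 * (ann M i j + adj (ann M) i j)
              + complex_of_real r2 * (\<i> * (ann M i j - adj (ann M) i j))
              + (\<Sum>l\<in>{1..s-1}. complex_of_real (c l) * mpow M (numop M) l i j))}"

definition nk :: "nat \<Rightarrow> nat \<Rightarrow> nat \<Rightarrow> nat" where
  "nk M s k = nat \<lfloor>real M * (sin (real k * pi / (2 * real s)))\<^sup>2\<rfloor>"

definition linsys :: "nat \<Rightarrow> nat \<Rightarrow> (nat \<Rightarrow> real) \<Rightarrow> bool" where
  "linsys M s x \<longleftrightarrow>
     (\<forall>i\<in>{1..s-1}. (\<Sum>k\<le>s. (-1)^k * x k * (real (nk M s k))^i) = 0)
     \<and> (\<Sum>k\<le>s. (-1)^k * x k) = 0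
     \<and> (\<Sum>k\<le>s. x k) = 2"

definition code0 :: "nat \<Rightarrow> nat \<Rightarrow> (nat \<Rightarrow> real) \<Rightarrow> fvec" where
  "code0 M s x = (\<lambda>m. \<Sum>k\<in>{k. k \<le> s \<and> even k}. complex_of_real (sqrt (x k)) * fock (nk M s k) m)"

definition code1 :: "nat \<Rightarrow> nat \<Rightarrow> (nat \<Rightarrow> real) \<Rightarrow> fvec" where
  "code1 M s x = (\<lambda>m. \<Sum>k\<in>{k. k \<le> s \<and> odd k}. complex_of_real (sqrt (x k)) * fock (nk M s k) m)"

definition codeP :: "nat \<Rightarrow> nat \<Rightarrow> (nat \<Rightarrow> real) \<Rightarrow> fop" where
  "codeP M s x = (\<lambda>i j. outer (code0 M s x) (code0 M s x) i j + outer (code1 M s x) (code1 M s x) i j)"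

end

theory Submission
  imports Defs "HOL-Computational_Algebra.Polynomial"
begin

definition Dn :: "(nat \<Rightarrow> real) \<Rightarrow> nat \<Rightarrow> nat \<Rightarrow> real" where
  "Dn z s k = (\<Prod>j\<in>{..s}-{k}. z k - z j)"

definition lagp :: "(nat \<Rightarrow> real) \<Rightarrow> nat \<Rightarrow> nat \<Rightarrow> real poly" where
  "lagp z s k = (\<Prod>j\<in>{..s}-{k}. [:- z j, 1:])"

lemma poly_lagp: "poly (lagp z s k) x = (\<Prod>j\<in>{..s}-{k}. x - z j)"
  by (simp add: lagp_def poly_prod)

lemma degree_lagp: assumes "k \<le> s" shows "degree (lagp z s k) = s"
proof -
  have "degree (lagp z s k) = (\<Sum>j\<in>{..s}-{k}. degree [:- z j, 1:])"
    unfolding lagp_def by (rule degree_prod_eq_sum_degree) auto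
  also have "\<dots> = card ({..s}-{k})" by simp
  also have "\<dots> = s" using assms by simp
  finally show ?thesis .
qed

lemma coeff_lagp: assumes "k \<le> s" shows "coeff (lagp z s k) s = 1"
proof -
  have "lead_coeff (lagp z s k) = (\<Prod>j\<in>{..s}-{k}. lead_coeff [:- z j, 1:])"
    unfolding lagp_def by (rule lead_coeff_prod)
  then show ?thesis using degree_lagp[OF assms] by simp
qed

lemma poly_sum_expand:
  fixes p :: "real poly"
  assumes "degree p \<le> s"
  shows "poly p x = (\<Sum>i\<le>s. coeff p i * x ^ i)"
proof -
  have "poly p x = (\<Sum>i\<le>degree p. coeff p i * x ^ i)" by (rule poly_altdef)
  also have "\<dots> = (\<Sum>i\<le>s. coeff p i * x ^ i)"
    by (rule sum.mono_neutral_left) (use assms in \<open>auto simp: le_degree\<close>)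
  finally show ?thesis .
qed

lemma sum_poly_kernel:
  fixes w z :: "nat \<Rightarrow> real"
  assumes k: "\<forall>i<s. (\<Sum>j\<le>s. w j * z j ^ i) = 0" and d: "degree p \<le> s"
  shows "(\<Sum>j\<le>s. w j * poly p (z j)) = coeff p s * (\<Sum>j\<le>s. w j * z j ^ s)"
proof -
  have "(\<Sum>j\<le>s. w j * poly p (z j)) = (\<Sum>j\<le>s. \<Sum>i\<le>s. coeff p i * (w j * z j ^ i))"
    by (simp add: poly_sum_expand[OF d] sum_distrib_left algebra_simps)
  also have "\<dots> = (\<Sum>i\<le>s. coeff p i * (\<Sum>j\<le>s. w j * z j ^ i))"
    by (subst sum.swap) (simp add: sum_distrib_left)
  also have "\<dots> = (\<Sum>i\<in>{s}. coeff p i * (\<Sum>j\<le>s. w j * z j ^ i))"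
    by (rule sum.mono_neutral_right) (use k in auto)
  finally show ?thesis by simp
qed

lemma kernel_Dn:
  fixes w z :: "nat \<Rightarrow> real"
  assumes k: "\<forall>i<s. (\<Sum>j\<le>s. w j * z j ^ i) = 0" and ks: "k \<le> s"
  shows "w k * Dn z s k = (\<Sum>j\<le>s. w j * z j ^ s)"
proof -
  have "(\<Sum>j\<le>s. w j * poly (lagp z s k) (z j)) = (\<Sum>j\<le>s. w j * z j ^ s)"
    using sum_poly_kernel[OF k, of "lagp z s k"] degree_lagp[OF ks] coeff_lagp[OF ks] by simp
  moreover have "(\<Sum>j\<le>s. w j * poly (lagp z s k) (z j)) = (\<Sum>j\<in>{k}. w j * poly (lagp z s k) (z j))"
  proof (rule sum.mono_neutral_right)
    show "\<forall>i\<in>{..s} - {k}. w i * poly (lagp z s k) (z i) = 0"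
    proof
      fix i assume i: "i \<in> {..s} - {k}"
      have "(\<Prod>j\<in>{..s}-{k}. z i - z j) = 0"
        by (rule prod_zero) (use i in auto)
      then show "w i * poly (lagp z s k) (z i) = 0" by (simp add: poly_lagp)
    qed
  qed (use ks in auto)
  ultimately show ?thesis by (simp add: poly_lagp Dn_def)
qed

lemma Dn_nonzero: assumes "inj_on z {..s}" "k \<le> s" shows "Dn z s k \<noteq> 0"
  unfolding Dn_def using assms by (auto simp: inj_on_def)

lemma lagrange_coeff:
  fixes z :: "nat \<Rightarrow> real"
  assumes inj: "inj_on z {..s}" and d: "degree p \<le> s"
  shows "(\<Sum>k\<le>s. poly p (z k) / Dn z s k) = coeff p s"
proof -
  define Q where "Q = (\<Sum>k\<le>s. smult (poly p (z k) / Dn z s k) (lagp z s k))"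
  have dQ: "degree Q \<le> s" unfolding Q_def
    by (rule degree_sum_le) (auto intro: order.trans[OF degree_smult_le] simp: degree_lagp)
  have pQ: "poly Q y = poly p y" if y: "y \<in> z ` {..s}" for y
  proof -
    obtain i where i: "i \<le> s" "y = z i" using y by auto
    have "poly Q y = (\<Sum>k\<le>s. poly p (z k) / Dn z s k * (\<Prod>j\<in>{..s}-{k}. z i - z j))"
      by (simp add: Q_def poly_sum poly_lagp i)
    also have "\<dots> = (\<Sum>k\<in>{i}. poly p (z k) / Dn z s k * (\<Prod>j\<in>{..s}-{k}. z i - z j))"
    proof (rule sum.mono_neutral_right)
      show "\<forall>k\<in>{..s} - {i}. poly p (z k) / Dn z s k * (\<Prod>j\<in>{..s}-{k}. z i - z j) = 0"
      proof
        fix k assume k: "k \<in> {..s} - {i}"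
        have "(\<Prod>j\<in>{..s}-{k}. z i - z j) = 0" by (rule prod_zero) (use k i in auto)
        then show "poly p (z k) / Dn z s k * (\<Prod>j\<in>{..s}-{k}. z i - z j) = 0" by simp
      qed
    qed (use i in auto)
    also have "\<dots> = poly p y" using Dn_nonzero[OF inj i(1)] i by (simp add: Dn_def)
    finally show ?thesis .
  qed
  have card: "card (z ` {..s}) = Suc s" using inj by (simp add: card_image)
  have "Q = p" by (rule poly_eqI_degree[OF pQ]) (use card dQ d in auto)
  then have "coeff p s = coeff Q s" by simp
  also have "\<dots> = (\<Sum>k\<le>s. poly p (z k) / Dn z s k * coeff (lagp z s k) s)"
    by (simp add: Q_def coeff_sum)
  finally show ?thesis by (simp add: coeff_lagp)
qed

fun chs :: "nat \<Rightarrow> real poly" where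
  "chs 0 = 1"
| "chs (Suc 0) = [:1, -2:]"
| "chs (Suc (Suc n)) = smult 2 (chs (Suc n)) - pCons 0 (smult 4 (chs (Suc n))) - chs n"

lemma poly_chs: "poly (chs n) ((sin x)\<^sup>2) = cos (2 * real n * x)"
proof (induction n rule: chs.induct)
  case 1 then show ?case by simp
next
  case 2 then show ?case by (simp add: cos_double_sin)
next
  case (3 n)
  have c1: "cos (2 * x) = 1 - 2 * (sin x)\<^sup>2" by (simp add: cos_double_sin)
  have "cos (2 * real (Suc (Suc n)) * x) + cos (2 * real n * x)
        = 2 * cos (2 * x) * cos (2 * real (Suc n) * x)"
    using cos_times_cos[of "2*x" "2 * real (Suc n) * x"] by (simp add: algebra_simps)
  moreover have "poly (chs (Suc (Suc n))) ((sin x)\<^sup>2)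
     = 2 * (1 - 2 * (sin x)\<^sup>2) * cos (2 * real (Suc n) * x) - cos (2 * real n * x)"
    using 3 by (simp add: algebra_simps)
  moreover have "2 * (1 - 2 * (sin x)\<^sup>2) * cos (2 * real (Suc n) * x) = 2 * cos (2 * x) * cos (2 * real (Suc n) * x)"
    using c1 by simp
  ultimately show ?case by linarith
qed

lemma coeff_chs_high: "i > n \<Longrightarrow> coeff (chs n) i = 0"
proof (induction n arbitrary: i rule: chs.induct)
  case 1 then show ?case by (simp add: coeff_1)
next
  case 2 then show ?case by (cases i) (auto simp: coeff_pCons split: nat.splits)
next
  case (3 n)
  then show ?case by (cases i) (auto simp: coeff_pCons)
qed

definition lcs :: "nat \<Rightarrow> real" where "lcs n = (if n = 0 then 1 else - 2 * (- 4) ^ (n - 1))"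

lemma coeff_chs_top: "coeff (chs n) n = lcs n"
proof (induction n rule: chs.induct)
  case 1 then show ?case by (simp add: lcs_def)
next
  case 2 then show ?case by (simp add: lcs_def)
next
  case (3 n)
  have "coeff (chs (Suc (Suc n))) (Suc (Suc n)) = - 4 * coeff (chs (Suc n)) (Suc n)"
    using coeff_chs_high[of "Suc n" "Suc (Suc n)"] coeff_chs_high[of n "Suc (Suc n)"] by simp
  then show ?case using 3 by (simp add: lcs_def)
qed

lemma degree_chs: "degree (chs n) \<le> n"
  by (rule degree_le) (simp add: coeff_chs_high)

lemma lcs_nz: "lcs n \<noteq> 0" by (simp add: lcs_def)

definition eps :: "nat \<Rightarrow> nat \<Rightarrow> real" where
  "eps s k = (if k = 0 \<or> k = s then 1/2 else 1)"

lemma trig_sum_zero: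
  fixes s r :: nat
  assumes r: "0 < r" "r < 2 * s"
  shows "(\<Sum>k\<le>s. eps s k * cos (real k * (real r * pi / real s))) = 0"
proof -
  define a where "a = real r * pi / real s"
  have s0: "s > 0" using r by auto
  have ha: "sin (a/2) \<noteq> 0"
  proof -
    have "0 < a/2" using r s0 by (simp add: a_def)
    moreover have "a/2 < pi" using r s0 by (simp add: a_def field_simps)
    ultimately have "sin (a/2) > 0" by (rule sin_gt_zero)
    then show ?thesis by simp
  qed
  define f where "f k = sin ((2 * real k - 1) * a / 2)" for k :: nat
  have tel: "2 * sin (a/2) * cos (real k * a) = f (Suc k) - f k" for k
  proof -
    have e1: "2 * sin (a/2) * cos (real k * a) = sin (a/2 + real k * a) + sin (a/2 - real k * a)"
      using sin_times_cos[of "a/2" "real k * a"] by simp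
    have "a/2 - real k * a = - ((2 * real k - 1) * a / 2)" by (simp add: field_simps)
    then have e2: "sin (a/2 - real k * a) = - f k" unfolding f_def by (metis sin_minus)
    have "(2 * real (Suc k) - 1) * a / 2 = a/2 + real k * a" by (simp add: field_simps)
    then have e3: "sin (a/2 + real k * a) = f (Suc k)" unfolding f_def by metis
    show ?thesis using e1 e2 e3 by simp
  qed
  have sa: "real s * a = real r * pi" using s0 by (simp add: a_def)
  have "2 * sin (a/2) * (\<Sum>k\<le>s. cos (real k * a)) = (\<Sum>k<Suc s. f (Suc k) - f k)"
    by (simp add: sum_distrib_left tel lessThan_Suc_atMost)
  also have "\<dots> = f (Suc s) - f 0" by (rule sum_lessThan_telescope)
  also have "f (Suc s) = sin (real s * a + a/2)" by (simp add: f_def algebra_simps add_divide_distrib)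
  also have "\<dots> = (-1)^r * sin (a/2)" by (simp add: sin_add sa)
  also have "f 0 = - sin (a/2)" by (simp add: f_def)
  finally have S: "2 * sin (a/2) * (\<Sum>k\<le>s. cos (real k * a)) = ((-1)^r + 1) * sin (a/2)"
    by (simp add: algebra_simps)
  have E: "(\<Sum>k\<le>s. eps s k * cos (real k * a)) = (\<Sum>k\<le>s. cos (real k * a)) - 1/2 - (-1)^r / 2"
  proof -
    have "(\<Sum>k\<le>s. cos (real k * a)) = (\<Sum>k\<le>s. eps s k * cos (real k * a))
          + (\<Sum>k\<le>s. (1 - eps s k) * cos (real k * a))"
      by (simp add: sum.distrib[symmetric] algebra_simps)
    moreover have "(\<Sum>k\<le>s. (1 - eps s k) * cos (real k * a)) = (\<Sum>k\<in>{0,s}. (1 - eps s k) * cos (real k * a))"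
      by (rule sum.mono_neutral_right) (auto simp: eps_def)
    moreover have "(\<Sum>k\<in>{0,s}. (1 - eps s k) * cos (real k * a)) = 1/2 + (-1)^r / 2"
      using s0 by (simp add: eps_def sa)
    ultimately show ?thesis by simp
  qed
  have "2 * sin (a/2) * (\<Sum>k\<le>s. eps s k * cos (real k * a)) = 0"
    unfolding E using S by (simp add: algebra_simps)
  then show ?thesis using ha unfolding a_def by simp
qed

lemma sum_eps: "s > 0 \<Longrightarrow> (\<Sum>k\<le>s. eps s k) = real s"
proof -
  assume s0: "s > 0"
  have "(\<Sum>k\<le>s. 1::real) = (\<Sum>k\<le>s. eps s k) + (\<Sum>k\<le>s. 1 - eps s k)"
    by (simp add: sum.distrib[symmetric])
  moreover have "(\<Sum>k\<le>s. 1 - eps s k) = (\<Sum>k\<in>{0,s}. 1 - eps s k)"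
    by (rule sum.mono_neutral_right) (auto simp: eps_def)
  moreover have "(\<Sum>k\<in>{0,s}. 1 - eps s k) = 1" using s0 by (simp add: eps_def)
  ultimately show ?thesis by simp
qed

lemma neg1_sq: "(-1::real)^k * (-1)^k = 1"
  by (induct k) auto

lemma cheb_orth:
  fixes s j :: nat
  assumes s0: "s > 0" and j: "j \<le> s"
  shows "(\<Sum>k\<le>s. eps s k * (-1)^k * cos (real k * (real j * pi / real s)))
          = (if j = s then real s else 0)"
proof (cases "j = s")
  case True
  have "eps s k * (-1)^k * cos (real k * (real j * pi / real s)) = eps s k" for k
  proof -
    have "real k * (real j * pi / real s) = real k * pi" using s0 True by simp
    then have "cos (real k * (real j * pi / real s)) = (-1)^k" by simp
    then show ?thesis using neg1_sq[of k] by (simp add: mult.assoc)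
  qed
  then have "(\<Sum>k\<le>s. eps s k * (-1)^k * cos (real k * (real j * pi / real s))) = (\<Sum>k\<le>s. eps s k)"
    by (intro sum.cong) simp_all
  then show ?thesis using True sum_eps[OF s0] by simp
next
  case False
  then have jl: "j < s" using j by simp
  have pt: "eps s k * (-1)^k * cos (real k * (real j * pi / real s))
        = eps s k * cos (real k * (real (s - j) * pi / real s)) / 2
        + eps s k * cos (real k * (real (s + j) * pi / real s)) / 2" for k
  proof -
    define A where "A = real k * pi"
    define B where "B = real k * (real j * pi / real s)"
    have cA: "(-1::real)^k = cos A" by (simp add: A_def)
    have e1: "A - B = real k * (real (s - j) * pi / real s)"
      using jl s0 by (simp add: A_def B_def of_nat_diff field_simps)
    have e2: "A + B = real k * (real (s + j) * pi / real s)"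
      using s0 by (simp add: A_def B_def field_simps)
    have h: "(-1)^k * cos B = (cos (A - B) + cos (A + B)) / 2"
      unfolding cA by (rule cos_times_cos)
    have h2: "eps s k * (-1)^k * cos B = eps s k * cos (A - B) / 2 + eps s k * cos (A + B) / 2"
      unfolding mult.assoc by (subst h) (simp add: field_simps)
    show ?thesis using h2[unfolded e1 e2, unfolded B_def] .
  qed
  have "(\<Sum>k\<le>s. eps s k * (-1)^k * cos (real k * (real j * pi / real s)))
      = (\<Sum>k\<le>s. eps s k * cos (real k * (real (s - j) * pi / real s))) / 2
        + (\<Sum>k\<le>s. eps s k * cos (real k * (real (s + j) * pi / real s))) / 2"
    unfolding pt by (simp add: sum.distrib sum_divide_distrib)
  also have "\<dots> = 0"
    using trig_sum_zero[of "s - j" s] trig_sum_zero[of "s + j" s] jl by simp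
  finally show ?thesis using False by simp
qed

definition unode :: "nat \<Rightarrow> nat \<Rightarrow> real" where
  "unode s k = (sin (real k * pi / (2 * real s)))\<^sup>2"

definition Lfun :: "nat \<Rightarrow> real poly \<Rightarrow> real" where
  "Lfun s p = (\<Sum>k\<le>s. eps s k * (-1)^k * poly p (unode s k))"

lemma Lfun_chs: assumes s0: "s > 0" and j: "j \<le> s"
  shows "Lfun s (chs j) = coeff (chs j) s * real s / lcs s"
proof -
  have "poly (chs j) (unode s k) = cos (real k * (real j * pi / real s))" for k
    unfolding unode_def poly_chs by (simp add: algebra_simps)
  then have "Lfun s (chs j) = (if j = s then real s else 0)"
    using cheb_orth[OF s0 j] by (simp add: Lfun_def)
  moreover have "coeff (chs j) s = (if j = s then lcs s else 0)"
    using coeff_chs_top[of s] coeff_chs_high[of j s] j by auto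
  ultimately show ?thesis using lcs_nz[of s] by simp
qed

lemma Lfun_add: "Lfun s (p + q) = Lfun s p + Lfun s q"
  by (simp add: Lfun_def sum.distrib algebra_simps)

lemma Lfun_smult: "Lfun s (smult c p) = c * Lfun s p"
  by (simp add: Lfun_def sum_distrib_left algebra_simps)

lemma Lfun_poly: assumes s0: "s > 0"
  shows "degree p \<le> s \<Longrightarrow> Lfun s p = coeff p s * real s / lcs s"
proof (induction "degree p" arbitrary: p rule: less_induct)
  case less
  define d where "d = degree p"
  define c where "c = coeff p d / lcs d"
  define p' where "p' = p - smult c (chs d)"
  have pp: "p = p' + smult c (chs d)" by (simp add: p'_def)
  have cd: "coeff (chs d) d = lcs d" by (rule coeff_chs_top)
  have hp': "Lfun s p' = coeff p' s * real s / lcs s"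
  proof (cases "d = 0")
    case True
    have "[: coeff p 0 :] = p" using True d_def by (intro degree_0_id) simp
    then have "p' = 0" using True
      by (simp add: p'_def c_def lcs_def)
    then show ?thesis by (simp add: Lfun_def)
  next
    case False
    have dp': "degree p' < d"
    proof (rule degree_lessI)
      show "p' \<noteq> 0 \<or> d > 0" using False by simp
      show "\<forall>k\<ge>d. coeff p' k = 0"
      proof (intro allI impI)
        fix k assume k: "d \<le> k"
        show "coeff p' k = 0"
        proof (cases "k = d")
          case True then show ?thesis using cd lcs_nz[of d] by (simp add: p'_def c_def)
        next
          case False
          then have "k > d" using k by simp
          then show ?thesis using coeff_chs_high[of d k] by (simp add: p'_def d_def coeff_eq_0)
        qed
      qed
    qed
    then show ?thesis using less(1)[of p'] less(2) d_def by simp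
  qed
  have L1: "Lfun s p = Lfun s p' + c * Lfun s (chs d)"
    by (subst pp) (simp add: Lfun_add Lfun_smult)
  have C1: "coeff p s = coeff p' s + c * coeff (chs d) s" by (simp add: p'_def)
  have dle: "d \<le> s" using less(2) d_def by simp
  have L2: "Lfun s (chs d) = coeff (chs d) s * real s / lcs s" by (rule Lfun_chs[OF s0 dle])
  show ?case unfolding L1 C1 L2 hp' by (simp add: add_divide_distrib algebra_simps)
qed

lemma ann_diag[simp]: "ann M i i = 0"
  by (simp add: ann_def) arith

lemma numop_eq: "numop M i j = (if i = j \<and> i \<le> M then of_nat i else 0)"
proof -
  have t: "cnj (ann M k i) * ann M k j
      = (if k = i - 1 then (if 1 \<le> i \<and> i \<le> M \<and> i = j then of_nat i else 0) else 0)" for k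
  proof -
    have sq: "complex_of_real (sqrt (real i)) * complex_of_real (sqrt (real i)) = of_nat i"
      by (simp flip: of_real_mult)
    show ?thesis unfolding ann_def using sq by auto
  qed
  have "numop M i j = (\<Sum>k\<le>M. cnj (ann M k i) * ann M k j)"
    by (simp add: numop_def mmul_def adj_def)
  also have "\<dots> = (\<Sum>k\<le>M. (if k = i - 1 then (if 1 \<le> i \<and> i \<le> M \<and> i = j then of_nat i else 0) else 0))"
    using t by simp
  also have "\<dots> = (if i = j \<and> i \<le> M then of_nat i else 0)"
    by (auto simp: sum.delta')
  finally show ?thesis .
qed

lemma mpow_numop: "mpow M (numop M) l i j = (if i = j \<and> i \<le> M then (of_nat i) ^ l else 0)"
proof (induction l arbitrary: i j)
  case 0 then show ?case by (simp add: idop_def)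
next
  case (Suc l)
  have "mpow M (numop M) (Suc l) i j = (\<Sum>k\<le>M. numop M i k * mpow M (numop M) l k j)"
    by (simp add: mmul_def)
  also have "\<dots> = (\<Sum>k\<le>M. if k = i then (if i \<le> M then of_nat i * mpow M (numop M) l i j else 0) else 0)"
    by (intro sum.cong) (auto simp: numop_eq)
  also have "\<dots> = (if i = j \<and> i \<le> M then (of_nat i) ^ Suc l else 0)"
    using Suc by (auto simp: sum.delta')
  finally show ?case .
qed

lemma sum_fock: "(\<Sum>j\<le>M. f j * fock m j) = (if m \<le> M then f m else 0)"
  by (simp add: fock_def sum.delta' if_distrib cong: if_cong)

lemma bilin_fock:
  fixes n :: "nat \<Rightarrow> nat" and A :: fop and a b :: "nat \<Rightarrow> complex"
  assumes fin: "finite K1" "finite K2" and inj: "inj_on n (K1 \<union> K2)"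
    and le: "\<forall>k\<in>K1 \<union> K2. n k \<le> M"
    and Ad: "\<forall>k1\<in>K1. \<forall>k2\<in>K2. A (n k1) (n k2) = (if k1 = k2 then g (n k1) else 0)"
  shows "(\<Sum>i\<le>M. cnj (\<Sum>k\<in>K1. a k * fock (n k) i) * (\<Sum>j\<le>M. A i j * (\<Sum>k\<in>K2. b k * fock (n k) j)))
        = (\<Sum>k\<in>K1 \<inter> K2. cnj (a k) * b k * g (n k))"
proof -
  have inner: "(\<Sum>j\<le>M. A i j * (\<Sum>k\<in>K2. b k * fock (n k) j)) = (\<Sum>k\<in>K2. b k * A i (n k))" for i
  proof -
    have "(\<Sum>j\<le>M. A i j * (\<Sum>k\<in>K2. b k * fock (n k) j)) = (\<Sum>k\<in>K2. \<Sum>j\<le>M. (b k * A i j) * fock (n k) j)"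
      by (subst sum.swap) (simp add: sum_distrib_left algebra_simps)
    also have "\<dots> = (\<Sum>k\<in>K2. b k * A i (n k))"
      by (intro sum.cong refl) (use le in \<open>simp add: sum_fock\<close>)
    finally show ?thesis .
  qed
  have "(\<Sum>i\<le>M. cnj (\<Sum>k\<in>K1. a k * fock (n k) i) * (\<Sum>k\<in>K2. b k * A i (n k)))
      = (\<Sum>k1\<in>K1. \<Sum>i\<le>M. (cnj (a k1) * (\<Sum>k\<in>K2. b k * A i (n k))) * fock (n k1) i)"
  proof -
    have c: "cnj (\<Sum>k\<in>K1. a k * fock (n k) i) = (\<Sum>k\<in>K1. cnj (a k) * fock (n k) i)" for i
      by (simp add: fock_def if_distrib cong: if_cong)
    show ?thesis unfolding c sum_distrib_right
      by (subst sum.swap) (simp add: algebra_simps)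
  qed
  also have "\<dots> = (\<Sum>k1\<in>K1. cnj (a k1) * (\<Sum>k\<in>K2. b k * A (n k1) (n k)))"
    by (intro sum.cong refl) (use le in \<open>simp add: sum_fock\<close>)
  also have "\<dots> = (\<Sum>k1\<in>K1. \<Sum>k\<in>K2. if k = k1 then cnj (a k1) * b k1 * g (n k1) else 0)"
    by (intro sum.cong refl) (use Ad in \<open>auto simp: sum_distrib_left intro!: sum.cong\<close>)
  also have "\<dots> = (\<Sum>k1\<in>K1. if k1 \<in> K2 then cnj (a k1) * b k1 * g (n k1) else 0)"
    using fin by (simp add: sum.delta)
  also have "\<dots> = (\<Sum>k\<in>K1 \<inter> K2. cnj (a k) * b k * g (n k))"
    using fin by (simp add: sum.inter_restrict)
  finally show ?thesis by (simp add: inner)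
qed

lemma PSP_expand:
  fixes u v :: fvec and S :: fop and M :: nat
  defines "Q \<equiv> (\<lambda>x y. \<Sum>k\<le>M. \<Sum>l\<le>M. cnj (x k) * S k l * y l)"
  shows "mmul M (\<lambda>i j. outer u u i j + outer v v i j) (mmul M S (\<lambda>i j. outer u u i j + outer v v i j)) i j
     = u i * cnj (u j) * Q u u + u i * cnj (v j) * Q u v + v i * cnj (u j) * Q v u + v i * cnj (v j) * Q v v"
  unfolding Q_def mmul_def outer_def
  by (simp add: sum_distrib_left sum_distrib_right sum.distrib algebra_simps)

lemma frakS_form:
  assumes "S \<in> frakS M s"
  obtains r0 :: real and c :: "nat \<Rightarrow> real" where
    "\<And>i j. i \<le> M \<Longrightarrow> j \<le> M \<Longrightarrow> i \<noteq> Suc j \<Longrightarrow> j \<noteq> Suc i \<Longrightarrow>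
       S i j = (if i = j then complex_of_real (r0 + (\<Sum>l\<in>{1..s-1}. c l * real i ^ l)) else 0)"
proof -
  obtain r0 r1 r2 :: real and c :: "nat \<Rightarrow> real" where S:
    "S = (\<lambda>i j. complex_of_real r0 * idop M i j
              + complex_of_real r1 * (ann M i j + adj (ann M) i j)
              + complex_of_real r2 * (\<i> * (ann M i j - adj (ann M) i j))
              + (\<Sum>l\<in>{1..s-1}. complex_of_real (c l) * mpow M (numop M) l i j))"
    using assms unfolding frakS_def by blast
  show ?thesis
  proof (rule that[of r0 c])
    fix i j assume h: "i \<le> M" "j \<le> M" "i \<noteq> Suc j" "j \<noteq> Suc i"
    have a1: "ann M i j = 0" using h by (auto simp: ann_def)
    have a2: "adj (ann M) i j = 0" using h by (auto simp: adj_def ann_def)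
    show "S i j = (if i = j then complex_of_real (r0 + (\<Sum>l\<in>{1..s-1}. c l * real i ^ l)) else 0)"
      using h by (auto simp: S a1 a2 idop_def mpow_numop)
  qed
qed

lemma fnorm_nonneg: "fnorm M v \<ge> 0" by (simp add: fnorm_def sum_nonneg)

lemma fnorm_le1_comp: assumes "fnorm M v \<le> 1" "j \<le> M" shows "cmod (v j) \<le> 1"
proof -
  have "(cmod (v j))\<^sup>2 \<le> (\<Sum>m\<le>M. (cmod (v m))\<^sup>2)"
    by (rule member_le_sum) (use assms in auto)
  also have "\<dots> \<le> 1" using assms unfolding fnorm_def
    by (metis real_sqrt_le_1_iff sum_nonneg zero_le_power2)
  finally show ?thesis by (simp add: power_le_one_iff abs_le_square_iff) 
qed

lemma opnorm_bdd: "bdd_above {fnorm M (mvec M A v) | v. fnorm M v \<le> 1}"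
proof -
  define B where "B = sqrt (\<Sum>i\<le>M. (\<Sum>j\<le>M. cmod (A i j))\<^sup>2)"
  have "fnorm M (mvec M A v) \<le> B" if v: "fnorm M v \<le> 1" for v
  proof -
    have "cmod (mvec M A v i) \<le> (\<Sum>j\<le>M. cmod (A i j))" for i
    proof -
      have "cmod (mvec M A v i) \<le> (\<Sum>j\<le>M. cmod (A i j * v j))"
        unfolding mvec_def by (rule norm_sum)
      also have "\<dots> \<le> (\<Sum>j\<le>M. cmod (A i j))"
      proof (rule sum_mono)
        fix j assume "j \<in> {..M}"
        then have "cmod (v j) \<le> 1" using fnorm_le1_comp[OF v] by auto
        then show "cmod (A i j * v j) \<le> cmod (A i j)"
          by (simp add: norm_mult mult_left_le)
      qed
      finally show ?thesis .
    qed
    then have "(\<Sum>i\<le>M. (cmod (mvec M A v i))\<^sup>2) \<le> (\<Sum>i\<le>M. (\<Sum>j\<le>M. cmod (A i j))\<^sup>2)"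
      by (intro sum_mono power_mono) auto
    then show ?thesis unfolding fnorm_def B_def by simp
  qed
  then show ?thesis unfolding bdd_above_def by blast
qed

lemma fnorm_fock: "m \<le> M \<Longrightarrow> fnorm M (fock m) = 1"
proof -
  assume m: "m \<le> M"
  have "(\<Sum>i\<le>M. (cmod (fock m i))\<^sup>2) = (\<Sum>i\<le>M. if i = m then 1 else 0)"
    by (intro sum.cong) (auto simp: fock_def)
  then show ?thesis using m unfolding fnorm_def by (simp add: sum.delta')
qed

lemma opnorm_ge_diag: assumes "m \<le> M" shows "cmod (A m m) \<le> opnorm M A"
proof -
  have "cmod (A m m) \<le> fnorm M (mvec M A (fock m))"
  proof -
    have mv: "mvec M A (fock m) = (\<lambda>i. A i m)"
      unfolding mvec_def using assms by (simp add: sum_fock)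
    have "(cmod (A m m))\<^sup>2 \<le> (\<Sum>i\<le>M. (cmod (A i m))\<^sup>2)"
      by (rule member_le_sum) (use assms in auto)
    then have "sqrt ((cmod (A m m))\<^sup>2) \<le> sqrt (\<Sum>i\<le>M. (cmod (A i m))\<^sup>2)"
      by (rule real_sqrt_le_mono)
    then show ?thesis unfolding mv fnorm_def by simp
  qed
  also have "\<dots> \<le> opnorm M A"
    unfolding opnorm_def
    by (rule cSup_upper[OF _ opnorm_bdd]) (use assms fnorm_fock in auto)
  finally show ?thesis .
qed

lemma opnorm_nonneg: "opnorm M A \<ge> 0"
  using opnorm_ge_diag[of 0 M A] norm_ge_zero[of "A 0 0"] by linarith

lemma opnorm_diag_le:
  assumes diag: "\<And>i j. i \<le> M \<Longrightarrow> j \<le> M \<Longrightarrow> A i j = (if i = j then d i else 0)"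
    and bnd: "\<And>i. i \<le> M \<Longrightarrow> cmod (d i) \<le> B"
  shows "opnorm M A \<le> B"
  unfolding opnorm_def
proof (rule cSup_least)
  show "{fnorm M (mvec M A v) |v. fnorm M v \<le> 1} \<noteq> {}"
  proof -
    have "fnorm M (mvec M A (fock 0)) \<in> {fnorm M (mvec M A v) |v. fnorm M v \<le> 1}"
      using fnorm_fock[of 0 M] by auto
    then show ?thesis by blast
  qed
next
  fix y assume "y \<in> {fnorm M (mvec M A v) |v. fnorm M v \<le> 1}"
  then obtain v where y: "y = fnorm M (mvec M A v)" and v: "fnorm M v \<le> 1" by auto
  have B0: "B \<ge> 0" using bnd[of 0] norm_ge_zero[of "d 0"] by linarith
  have mv: "mvec M A v i = d i * v i" if "i \<le> M" for i
  proof -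
    have "mvec M A v i = (\<Sum>j\<le>M. if j = i then d i * v j else 0)"
      unfolding mvec_def by (intro sum.cong) (use that diag in auto)
    then show ?thesis using that by (simp add: sum.delta')
  qed
  have "(\<Sum>i\<le>M. (cmod (mvec M A v i))\<^sup>2) \<le> (\<Sum>i\<le>M. B\<^sup>2 * (cmod (v i))\<^sup>2)"
  proof (rule sum_mono)
    fix i assume i: "i \<in> {..M}"
    have "(cmod (mvec M A v i))\<^sup>2 = (cmod (d i))\<^sup>2 * (cmod (v i))\<^sup>2"
      using i by (simp add: mv norm_mult power_mult_distrib)
    also have "\<dots> \<le> B\<^sup>2 * (cmod (v i))\<^sup>2"
      using bnd[of i] i by (intro mult_right_mono power_mono) auto
    finally show "(cmod (mvec M A v i))\<^sup>2 \<le> B\<^sup>2 * (cmod (v i))\<^sup>2" .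
  qed
  also have "\<dots> = B\<^sup>2 * (fnorm M v)\<^sup>2" by (simp add: fnorm_def sum_distrib_left sum_nonneg)
  also have "\<dots> \<le> B\<^sup>2 * 1" using v fnorm_nonneg[of M v]
    by (intro mult_left_mono) (auto simp: power_le_one)
  finally have "(fnorm M (mvec M A v))\<^sup>2 \<le> B\<^sup>2" by (simp add: fnorm_def sum_nonneg)
  then show "y \<le> B" unfolding y using B0 by (simp add: abs_le_square_iff[symmetric] fnorm_nonneg)
qed

lemma unode_alt: "nk M s k = nat \<lfloor>real M * unode s k\<rfloor>"
  by (simp add: nk_def unode_def)

lemma unode_bounds: "0 \<le> unode s k" "unode s k \<le> 1"
  by (auto simp: unode_def abs_square_le_1)

lemma unode_mono:
  assumes s0: "s > 0" and kk: "k < k'" "k' \<le> s"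
  shows "unode s k < unode s k'"
proof -
  have a: "real k * pi / (2 * real s) < real k' * pi / (2 * real s)"
    using kk s0 by (intro divide_strict_right_mono mult_strict_right_mono) auto
  have b: "real k' * pi / (2 * real s) \<le> pi / 2"
  proof -
    have "real k' * pi / (2 * real s) \<le> real s * pi / (2 * real s)"
      using kk by (intro divide_right_mono mult_right_mono) auto
    then show ?thesis using s0 by simp
  qed
  have c: "- (pi/2) \<le> real k * pi / (2 * real s)" using s0
    by (smt (verit, ccfv_SIG) divide_nonneg_nonneg mult_nonneg_nonneg of_nat_0_le_iff pi_gt_zero)
  have x0: "0 \<le> real k * pi / (2 * real s)" by simp
  have x1: "real k * pi / (2 * real s) \<le> pi" using a b pi_gt_zero by linarith
  have d0: "0 \<le> sin (real k * pi / (2 * real s))"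
    using x0 x1 by (rule sin_ge_zero)
  have "sin (real k * pi / (2 * real s)) < sin (real k' * pi / (2 * real s))"
    using c a b by (rule sin_monotone_2pi)
  then show ?thesis unfolding unode_def using d0 by (intro power_strict_mono) auto
qed

lemma nk_bounds:
  "real M * unode s k - 1 < real (nk M s k)" "real (nk M s k) \<le> real M * unode s k"
proof -
  have nn: "0 \<le> real M * unode s k" using unode_bounds by simp
  have e: "real (nk M s k) = of_int \<lfloor>real M * unode s k\<rfloor>"
    unfolding unode_alt using nn by simp
  show "real M * unode s k - 1 < real (nk M s k)" unfolding e by linarith
  show "real (nk M s k) \<le> real M * unode s k" unfolding e by linarith
qed

lemma nk_le_M: "nk M s k \<le> M"
proof -
  have "real (nk M s k) \<le> real M * unode s k" by (rule nk_bounds)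
  also have "\<dots> \<le> real M" using unode_bounds[of s k] by (simp add: mult_left_le)
  finally show ?thesis by simp
qed

lemma nk_gap_eventually:
  assumes s0: "s > 0" and k: "k < s"
  shows "eventually (\<lambda>M. nk M s k + 3 \<le> nk M s (Suc k)) sequentially"
proof -
  define d where "d = unode s (Suc k) - unode s k"
  have d: "d > 0" using unode_mono[OF s0, of k "Suc k"] k by (simp add: d_def)
  have "eventually (\<lambda>M. real M \<ge> 4 / d) sequentially"
    by (rule eventually_sequentiallyI[of "nat \<lceil>4/d\<rceil>"]) linarith
  then show ?thesis
  proof (rule eventually_mono)
    fix M assume M: "real M \<ge> 4 / d"
    have "real M * d \<ge> 4" using M d by (simp add: field_simps)
    then have "real (nk M s (Suc k)) - real (nk M s k) > 3"
      using nk_bounds[of M s k] nk_bounds[of M s "Suc k"] by (simp add: d_def algebra_simps)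
    then show "nk M s k + 3 \<le> nk M s (Suc k)" by linarith
  qed
qed

lemma chain_gap:
  fixes f :: "nat \<Rightarrow> nat"
  assumes "\<forall>k<s. f k + 3 \<le> f (Suc k)"
  shows "k1 < k2 \<Longrightarrow> k2 \<le> s \<Longrightarrow> f k1 + 3 \<le> f k2"
proof (induction k2)
  case 0 then show ?case by simp
next
  case (Suc k2)
  show ?case
  proof (cases "k1 = k2")
    case True then show ?thesis using assms Suc by auto
  next
    case False
    then have "f k1 + 3 \<le> f k2" using Suc by auto
    moreover have "f k2 + 3 \<le> f (Suc k2)" using assms Suc.prems by auto
    ultimately show ?thesis by linarith
  qed
qed

lemma y_tendsto: "((\<lambda>M. real (nk M s k) / real M) \<longlongrightarrow> unode s k) sequentially"
proof (rule real_tendsto_sandwich)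
  show "eventually (\<lambda>M. unode s k - 1 / real M \<le> real (nk M s k) / real M) sequentially"
    using eventually_gt_at_top[of "0::nat"]
  proof (rule eventually_mono)
    fix M :: nat assume M: "M > 0"
    have e: "unode s k - 1 / real M = (real M * unode s k - 1) / real M" using M by (simp add: field_simps)
    show "unode s k - 1 / real M \<le> real (nk M s k) / real M"
      unfolding e using nk_bounds[of M s k] M by (intro divide_right_mono) auto
  qed
  show "eventually (\<lambda>M. real (nk M s k) / real M \<le> unode s k) sequentially"
    using eventually_gt_at_top[of "0::nat"]
  proof (rule eventually_mono)
    fix M :: nat assume M: "M > 0"
    then show "real (nk M s k) / real M \<le> unode s k"
      using nk_bounds[of M s k] by (simp add: field_simps)
  qed
  show "((\<lambda>M. unode s k - 1 / real M) \<longlongrightarrow> unode s k) sequentially"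
    using tendsto_diff[OF tendsto_const lim_1_over_n] by simp
qed (rule tendsto_const)

lemma Dn_tendsto:
  assumes "\<And>j. j \<le> s \<Longrightarrow> ((\<lambda>M. y M j) \<longlongrightarrow> u j) F" and "k \<le> s"
  shows "((\<lambda>M. Dn (y M) s k) \<longlongrightarrow> Dn u s k) F"
  unfolding Dn_def
  by (intro tendsto_prod tendsto_diff assms) auto

lemma u_inj: "s > 0 \<Longrightarrow> inj_on (unode s) {..s}"
  by (rule inj_onI) (metis atMost_iff linorder_neqE_nat order_less_irrefl unode_mono)

lemma eps_nz: "eps s k \<noteq> 0" by (simp add: eps_def)

lemma u_kernel:
  assumes s0: "s > 0"
  shows "\<forall>i<s. (\<Sum>j\<le>s. (eps s j * (-1)^j) * unode s j ^ i) = 0"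
proof (intro allI impI)
  fix i assume i: "i < s"
  have "Lfun s (monom 1 i) = coeff (monom 1 i) s * real s / lcs s"
    by (rule Lfun_poly[OF s0]) (use i in \<open>simp add: degree_monom_eq\<close>)
  then show "(\<Sum>j\<le>s. (eps s j * (-1)^j) * unode s j ^ i) = 0"
    using i by (simp add: Lfun_def poly_monom coeff_monom)
qed

lemma u_top:
  assumes s0: "s > 0"
  shows "(\<Sum>j\<le>s. (eps s j * (-1)^j) * unode s j ^ s) = real s / lcs s"
proof -
  have "Lfun s (monom 1 s) = coeff (monom 1 s) s * real s / lcs s"
    by (rule Lfun_poly[OF s0]) (simp add: degree_monom_eq)
  then show ?thesis by (simp add: Lfun_def poly_monom)
qed

lemma inv_Dn_u:
  assumes s0: "s > 0" and k: "k \<le> s"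
  shows "1 / Dn (unode s) s k = eps s k * (-1)^k * lcs s / real s"
proof -
  have h: "(eps s k * (-1)^k) * Dn (unode s) s k = real s / lcs s"
    using kernel_Dn[OF u_kernel[OF s0] k] u_top[OF s0] by simp
  have "Dn (unode s) s k \<noteq> 0" by (rule Dn_nonzero[OF u_inj[OF s0] k])
  then show ?thesis using h lcs_nz[of s] s0 eps_nz[of s k] neg1_sq[of k]
    by (simp add: field_simps)
qed

lemma Gu: assumes s0: "s > 0"
  shows "(\<Sum>j\<le>s. (-1)^j / Dn (unode s) s j) = lcs s"
proof -
  have "(\<Sum>j\<le>s. (-1)^j / Dn (unode s) s j) = (\<Sum>j\<le>s. eps s j * (lcs s / real s))"
  proof (intro sum.cong refl)
    fix j assume "j \<in> {..s}"
    then have "1 / Dn (unode s) s j = eps s j * (-1)^j * lcs s / real s" using inv_Dn_u[OF s0] by simp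
    then have "(-1)^j / Dn (unode s) s j = (-1)^j * (eps s j * (-1)^j * lcs s / real s)"
      by (metis times_divide_eq_right mult.right_neutral)
    also have "\<dots> = eps s j * (lcs s / real s) * ((-1)^j * (-1)^j)" by (simp add: algebra_simps)
    finally show "(-1)^j / Dn (unode s) s j = eps s j * (lcs s / real s)" using neg1_sq[of j] by simp
  qed
  also have "\<dots> = (\<Sum>j\<le>s. eps s j) * (lcs s / real s)" by (rule sum_distrib_right[symmetric])
  also have "\<dots> = lcs s" using sum_eps[OF s0] s0 by simp
  finally show ?thesis .
qed

lemma sol_lemma:
  fixes yv :: "nat \<Rightarrow> real" and Mr :: real
  assumes s0: "s > 0" and Mr: "Mr > 0" and inj: "inj_on yv {..s}"
  defines "G \<equiv> (\<Sum>j\<le>s. (-1)^j / Dn yv s j)"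
  defines "X \<equiv> (\<lambda>k. 2 * (-1)^k / (Dn yv s k * G))"
  assumes G0: "G \<noteq> 0"
  shows "\<forall>i<s. (\<Sum>k\<le>s. (-1)^k * X k * (Mr * yv k)^i) = 0"
    and "(\<Sum>k\<le>s. X k) = 2"
    and "(\<Sum>k\<le>s. (-1)^k * X k * (Mr * yv k)^s) = 2 * Mr^s / G"
    and "\<And>Y. (\<forall>i<s. (\<Sum>k\<le>s. (-1)^k * Y k * (Mr * yv k)^i) = 0) \<Longrightarrow> (\<Sum>k\<le>s. Y k) = 2
          \<Longrightarrow> \<forall>k\<le>s. Y k = X k"
proof -
  have sX: "(-1)^k * X k = 2 / G * (1 / Dn yv s k)" for k
    using neg1_sq[of k] by (simp add: X_def field_simps)
  have lag: "(\<Sum>k\<le>s. yv k ^ i / Dn yv s k) = (if i = s then 1 else 0)" if "i \<le> s" for i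
    using lagrange_coeff[OF inj, of "monom 1 i"] that
    by (simp add: poly_monom degree_monom_eq coeff_monom)
  have gen1: "(-1)^k * X k * (Mr * yv k)^i = 2 / G * Mr^i * (yv k ^ i / Dn yv s k)" for k i
    by (subst sX) (simp add: power_mult_distrib)
  have gen: "(\<Sum>k\<le>s. (-1)^k * X k * (Mr * yv k)^i) = 2 / G * Mr^i * (\<Sum>k\<le>s. yv k ^ i / Dn yv s k)" for i
    unfolding gen1 by (simp add: sum_distrib_left)
  show "\<forall>i<s. (\<Sum>k\<le>s. (-1)^k * X k * (Mr * yv k)^i) = 0"
    using gen lag by simp
  show "(\<Sum>k\<le>s. (-1)^k * X k * (Mr * yv k)^s) = 2 * Mr^s / G"
    using gen lag[of s] by simp
  have Xk: "X k = 2 / G * ((-1)^k / Dn yv s k)" for k by (simp add: X_def)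
  have sumX: "(\<Sum>k\<le>s. X k) = 2 / G * G"
    unfolding Xk by (subst sum_distrib_left[symmetric]) (simp only: G_def)
  have two: "2 / G * G = 2" using G0 by simp
  show "(\<Sum>k\<le>s. X k) = 2" using sumX two by (rule trans)
  fix Y assume hY: "\<forall>i<s. (\<Sum>k\<le>s. (-1)^k * Y k * (Mr * yv k)^i) = 0" and sY: "(\<Sum>k\<le>s. Y k) = 2"
  define w where "w k = (-1)^k * Y k" for k
  have wk: "\<forall>i<s. (\<Sum>j\<le>s. w j * yv j ^ i) = 0"
  proof (intro allI impI)
    fix i assume i: "i < s"
    have "(\<Sum>k\<le>s. (-1)^k * Y k * (Mr * yv k)^i) = Mr^i * (\<Sum>j\<le>s. w j * yv j ^ i)"
      by (simp add: w_def sum_distrib_left power_mult_distrib algebra_simps)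
    then show "(\<Sum>j\<le>s. w j * yv j ^ i) = 0" using hY i Mr by simp
  qed
  define C where "C = (\<Sum>j\<le>s. w j * yv j ^ s)"
  have wD: "w k = C / Dn yv s k" if "k \<le> s" for k
    using kernel_Dn[OF wk that] Dn_nonzero[OF inj that] by (simp add: C_def field_simps)
  have Yk: "Y k = (-1)^k * w k" for k using neg1_sq[of k] by (simp add: w_def)
  have "2 = (\<Sum>k\<le>s. (-1)^k * (C / Dn yv s k))" using sY Yk wD by simp
  also have "\<dots> = C * G" by (simp add: G_def sum_distrib_left field_simps)
  finally have CG: "C = 2 / G" using G0 by (simp add: field_simps)
  show "\<forall>k\<le>s. Y k = X k"
  proof (intro allI impI)
    fix k assume "k \<le> s"
    then show "Y k = X k" using Yk wD CG by (simp add: X_def mult.commute)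
  qed
qed

lemma linsys_iff:
  assumes s0: "s > 0"
  shows "linsys M s x \<longleftrightarrow> (\<forall>i<s. (\<Sum>k\<le>s. (-1)^k * x k * real (nk M s k) ^ i) = 0) \<and> (\<Sum>k\<le>s. x k) = 2"
proof -
  have "(\<forall>i<s. (\<Sum>k\<le>s. (-1)^k * x k * real (nk M s k) ^ i) = 0) \<longleftrightarrow>
        (\<forall>i\<in>{1..s-1}. (\<Sum>k\<le>s. (-1)^k * x k * real (nk M s k) ^ i) = 0) \<and> (\<Sum>k\<le>s. (-1)^k * x k) = 0"
  proof
    assume h: "\<forall>i<s. (\<Sum>k\<le>s. (-1)^k * x k * real (nk M s k) ^ i) = 0"
    show "(\<forall>i\<in>{1..s-1}. (\<Sum>k\<le>s. (-1)^k * x k * real (nk M s k) ^ i) = 0) \<and> (\<Sum>k\<le>s. (-1)^k * x k) = 0"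
      using h s0 h[rule_format, of 0] by auto
  next
    assume h: "(\<forall>i\<in>{1..s-1}. (\<Sum>k\<le>s. (-1)^k * x k * real (nk M s k) ^ i) = 0) \<and> (\<Sum>k\<le>s. (-1)^k * x k) = 0"
    show "\<forall>i<s. (\<Sum>k\<le>s. (-1)^k * x k * real (nk M s k) ^ i) = 0"
    proof (intro allI impI)
      fix i assume i: "i < s"
      show "(\<Sum>k\<le>s. (-1)^k * x k * real (nk M s k) ^ i) = 0"
      proof (cases "i = 0")
        case True then show ?thesis using h by simp
      next
        case False then show ?thesis using h i by auto
      qed
    qed
  qed
  then show ?thesis unfolding linsys_def by auto
qed

abbreviation Fm :: "nat \<Rightarrow> nat \<Rightarrow> real" where
  "Fm M s \<equiv> (INF S\<in>frakS M s. opnorm M (\<lambda>i j. mpow M (numop M) s i j - S i j))"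

lemma Fm_bdd: "bdd_below ((\<lambda>S. opnorm M (\<lambda>i j. mpow M (numop M) s i j - S i j)) ` frakS M s)"
  by (rule bdd_belowI[of _ 0]) (auto simp: opnorm_nonneg)

lemma frakS_ne: "frakS M s \<noteq> {}"
proof -
  have "(\<lambda>i j. complex_of_real 0 * idop M i j
              + complex_of_real 0 * (ann M i j + adj (ann M) i j)
              + complex_of_real 0 * (\<i> * (ann M i j - adj (ann M) i j))
              + (\<Sum>l\<in>{1..s-1}. complex_of_real ((\<lambda>_. 0) l) * mpow M (numop M) l i j)) \<in> frakS M s"
    unfolding frakS_def mem_Collect_eq
    by (rule exI[of _ 0], rule exI[of _ 0], rule exI[of _ 0], rule exI[of _ "\<lambda>_. 0"]) simp
  then show ?thesis by blast
qed

lemma chs_bound: assumes "0 \<le> t" "t \<le> 1" shows "\<bar>poly (chs n) t\<bar> \<le> 1"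
proof -
  define th where "th = arcsin (sqrt t)"
  have a1: "sqrt t \<le> 1" using assms by simp
  have a2: "-1 \<le> sqrt t" using assms by (smt (verit) real_sqrt_ge_zero)
  have "sin th = sqrt t" unfolding th_def by (rule sin_arcsin[OF a2 a1])
  then have "(sin th)\<^sup>2 = t" using assms by simp
  then have "poly (chs n) t = cos (2 * real n * th)" using poly_chs[of n th] by simp
  then show ?thesis by simp
qed

lemma Fm_upper:
  assumes s2: "s \<ge> 2" and M1: "M \<ge> 1"
  shows "Fm M s \<le> 2 * (real M / 4) ^ s"
proof -
  have M0: "real M > 0" using M1 by simp
  define cc where "cc = real M ^ s / lcs s"
  define r0 where "r0 = - cc * coeff (chs s) 0"
  define c where "c l = - cc * coeff (chs s) l / real M ^ l" for l
  define S where "S = (\<lambda>i j. complex_of_real r0 * idop M i j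
              + complex_of_real 0 * (ann M i j + adj (ann M) i j)
              + complex_of_real 0 * (\<i> * (ann M i j - adj (ann M) i j))
              + (\<Sum>l\<in>{1..s-1}. complex_of_real (c l) * mpow M (numop M) l i j))"
  have SF: "S \<in> frakS M s" unfolding frakS_def S_def by blast
  define h where "h m = r0 + (\<Sum>l\<in>{1..s-1}. c l * real m ^ l)" for m :: nat
  have Sij: "S i j = (if i = j then complex_of_real (h i) else 0)" if "i \<le> M" "j \<le> M" for i j
  proof (cases "i = j")
    case True
    then show ?thesis using that by (simp add: S_def h_def idop_def mpow_numop)
  next
    case False
    then show ?thesis using that by (simp add: S_def h_def idop_def mpow_numop)
  qed
  have key: "real i ^ s - h i = cc * poly (chs s) (real i / real M)" for i :: nat
  proof -
    have split: "{..s} = insert 0 (insert s {1..s-1})" using s2 by auto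
    have fin: "0 \<notin> insert s {1..s-1}" "s \<notin> {1..s-1}" using s2 by auto
    have "poly (chs s) (real i / real M) = (\<Sum>l\<le>s. coeff (chs s) l * (real i / real M) ^ l)"
      by (rule poly_sum_expand[OF degree_chs])
    also have "\<dots> = coeff (chs s) 0 + (lcs s * (real i / real M) ^ s
        + (\<Sum>l\<in>{1..s-1}. coeff (chs s) l * (real i / real M) ^ l))"
      unfolding split using fin by (simp add: coeff_chs_top)
    finally have P: "poly (chs s) (real i / real M) = \<dots>" .
    have t1: "cc * (lcs s * (real i / real M) ^ s) = real i ^ s"
      using M0 lcs_nz[of s] by (simp add: cc_def power_divide)
    have t2: "cc * (\<Sum>l\<in>{1..s-1}. coeff (chs s) l * (real i / real M) ^ l) = - (\<Sum>l\<in>{1..s-1}. c l * real i ^ l)"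
      by (simp add: c_def sum_distrib_left sum_negf[symmetric] power_divide mult.assoc)
    show ?thesis unfolding P h_def r0_def using t1 t2 by (simp add: distrib_left)
  qed
  have ccabs: "\<bar>cc\<bar> = 2 * (real M / 4) ^ s"
  proof -
    have "\<bar>lcs s\<bar> = 2 * 4 ^ (s - 1)" using s2 by (simp add: lcs_def abs_mult power_abs)
    moreover have "(4::real) ^ s = 4 * 4 ^ (s - 1)" using s2 by (metis power_eq_if not_numeral_le_zero le_zero_eq)
    ultimately show ?thesis using M0 by (simp add: cc_def abs_divide power_divide field_simps)
  qed
  have "opnorm M (\<lambda>i j. mpow M (numop M) s i j - S i j) \<le> 2 * (real M / 4) ^ s"
  proof (rule opnorm_diag_le)
    fix i j assume ij: "i \<le> M" "j \<le> M"
    show "mpow M (numop M) s i j - S i j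
        = (if i = j then complex_of_real (real i ^ s - h i) else 0)"
      using ij by (simp add: Sij mpow_numop)
  next
    fix i assume i: "i \<le> M"
    have "\<bar>real i ^ s - h i\<bar> = \<bar>cc\<bar> * \<bar>poly (chs s) (real i / real M)\<bar>" by (simp add: key abs_mult)
    also have "\<dots> \<le> \<bar>cc\<bar> * 1"
      using i M0 by (intro mult_left_mono chs_bound) auto
    finally have "\<bar>real i ^ s - h i\<bar> \<le> 2 * (real M / 4) ^ s" using ccabs by simp
    then show "cmod (complex_of_real (real i ^ s - h i)) \<le> 2 * (real M / 4) ^ s"
      by (metis norm_of_real)
  qed
  moreover have "Fm M s \<le> opnorm M (\<lambda>i j. mpow M (numop M) s i j - S i j)"
    by (rule cINF_lower[OF Fm_bdd SF])
  ultimately show ?thesis by linarith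
qed

lemma Fm_lower:
  assumes s2: "s \<ge> 2" and ls: "linsys M s x" and xpos: "\<forall>k\<le>s. 0 \<le> x k"
  shows "\<bar>\<Sum>k\<le>s. (-1)^k * x k * real (nk M s k) ^ s\<bar> \<le> 2 * Fm M s"
proof -
  define D where "D = \<bar>\<Sum>k\<le>s. (-1)^k * x k * real (nk M s k) ^ s\<bar>"
  have sx: "(\<Sum>k\<le>s. x k) = 2" using ls by (simp add: linsys_def)
  have "D / 2 \<le> Fm M s"
  proof (rule cINF_greatest[OF frakS_ne])
    fix S assume SF: "S \<in> frakS M s"
    obtain r0 c where Sf: "\<And>i j. i \<le> M \<Longrightarrow> j \<le> M \<Longrightarrow> i \<noteq> Suc j \<Longrightarrow> j \<noteq> Suc i \<Longrightarrow>
       S i j = (if i = j then complex_of_real (r0 + (\<Sum>l\<in>{1..s-1}. c l * real i ^ l)) else 0)"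
      using frakS_form[OF SF] by blast
    define h where "h m = r0 + (\<Sum>l\<in>{1..s-1}. c l * real m ^ l)" for m :: nat
    define on where "on = opnorm M (\<lambda>i j. mpow M (numop M) s i j - S i j)"
    have diag: "\<bar>real m ^ s - h m\<bar> \<le> on" if "m \<le> M" for m
    proof -
      have "cmod (mpow M (numop M) s m m - S m m) \<le> on"
        unfolding on_def using opnorm_ge_diag[OF that, of "\<lambda>i j. mpow M (numop M) s i j - S i j"] by simp
      moreover have "mpow M (numop M) s m m - S m m = complex_of_nat m ^ s - complex_of_real (h m)"
        using that Sf[of m m] by (simp add: mpow_numop h_def)
      moreover have "complex_of_nat m ^ s - complex_of_real (h m) = complex_of_real (real m ^ s - h m)"
        by simp
      ultimately show ?thesis by (metis norm_of_real)
    qed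
    have hz: "(\<Sum>k\<le>s. (-1)^k * x k * h (nk M s k)) = 0"
    proof -
      have "(\<Sum>k\<le>s. (-1)^k * x k * h (nk M s k))
          = r0 * (\<Sum>k\<le>s. (-1)^k * x k) + (\<Sum>l\<in>{1..s-1}. c l * (\<Sum>k\<le>s. (-1)^k * x k * real (nk M s k) ^ l))"
        by (simp add: h_def sum_distrib_left sum_distrib_right sum.distrib algebra_simps) (rule sum.swap)
      also have "\<dots> = 0" using ls by (simp add: linsys_def)
      finally show ?thesis .
    qed
    have "D = \<bar>\<Sum>k\<le>s. (-1)^k * x k * (real (nk M s k) ^ s - h (nk M s k))\<bar>"
      unfolding D_def using hz by (simp add: right_diff_distrib sum_subtractf)
    also have "\<dots> \<le> (\<Sum>k\<le>s. \<bar>(-1)^k * x k * (real (nk M s k) ^ s - h (nk M s k))\<bar>)"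
      by (rule sum_abs)
    also have "\<dots> \<le> (\<Sum>k\<le>s. x k * on)"
    proof (rule sum_mono)
      fix k assume k: "k \<in> {..s}"
      have "\<bar>(-1)^k * x k * (real (nk M s k) ^ s - h (nk M s k))\<bar> = x k * \<bar>real (nk M s k) ^ s - h (nk M s k)\<bar>"
        using xpos k by (simp add: abs_mult power_abs)
      also have "\<dots> \<le> x k * on" using xpos k diag[OF nk_le_M] by (intro mult_left_mono) auto
      finally show "\<bar>(-1)^k * x k * (real (nk M s k) ^ s - h (nk M s k))\<bar> \<le> x k * on" .
    qed
    also have "\<dots> = 2 * on" using sx by (simp add: sum_distrib_right[symmetric])
    finally show "D / 2 \<le> opnorm M (\<lambda>i j. mpow M (numop M) s i j - S i j)" unfolding on_def by simp
  qed
  then show ?thesis unfolding D_def by simp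
qed

lemma split_even_odd:
  fixes f :: "nat \<Rightarrow> 'a::comm_ring_1"
  shows "(\<Sum>k\<le>s. f k) = (\<Sum>k\<in>{k. k \<le> s \<and> even k}. f k) + (\<Sum>k\<in>{k. k \<le> s \<and> odd k}. f k)"
    and "(\<Sum>k\<le>s. (-1)^k * f k) = (\<Sum>k\<in>{k. k \<le> s \<and> even k}. f k) - (\<Sum>k\<in>{k. k \<le> s \<and> odd k}. f k)"
proof -
  have U: "{..s} = {k. k \<le> s \<and> even k} \<union> {k. k \<le> s \<and> odd k}" by auto
  have D: "{k. k \<le> s \<and> even k} \<inter> {k. k \<le> s \<and> odd k} = {}" by auto
  have F: "finite {k. k \<le> s \<and> even k}" "finite {k. k \<le> s \<and> odd k}" by auto
  show "(\<Sum>k\<le>s. f k) = (\<Sum>k\<in>{k. k \<le> s \<and> even k}. f k) + (\<Sum>k\<in>{k. k \<le> s \<and> odd k}. f k)"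
    unfolding U by (rule sum.union_disjoint[OF F D])
  have "(\<Sum>k\<le>s. (-1)^k * f k) = (\<Sum>k\<in>{k. k \<le> s \<and> even k}. (-1)^k * f k) + (\<Sum>k\<in>{k. k \<le> s \<and> odd k}. (-1)^k * f k)"
    unfolding U by (rule sum.union_disjoint[OF F D])
  also have "(\<Sum>k\<in>{k. k \<le> s \<and> even k}. (-1)^k * f k) = (\<Sum>k\<in>{k. k \<le> s \<and> even k}. f k)"
    by (intro sum.cong) auto
  also have "(\<Sum>k\<in>{k. k \<le> s \<and> odd k}. (-1)^k * f k) = - (\<Sum>k\<in>{k. k \<le> s \<and> odd k}. f k)"
    by (simp add: sum_negf[symmetric])
  finally show "(\<Sum>k\<le>s. (-1)^k * f k) = (\<Sum>k\<in>{k. k \<le> s \<and> even k}. f k) - (\<Sum>k\<in>{k. k \<le> s \<and> odd k}. f k)"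
    by simp
qed

locale codeloc =
  fixes M s :: nat and x :: "nat \<Rightarrow> real"
  assumes s2: "s \<ge> 2"
    and gaps: "\<forall>k<s. nk M s k + 3 \<le> nk M s (Suc k)"
    and ls: "linsys M s x"
    and xpos: "\<forall>k\<le>s. 0 \<le> x k"
begin

abbreviation "n \<equiv> nk M s"
abbreviation "Ev \<equiv> {k. k \<le> s \<and> even k}"
abbreviation "Od \<equiv> {k. k \<le> s \<and> odd k}"

lemma n_lt: "k1 < k2 \<Longrightarrow> k2 \<le> s \<Longrightarrow> n k1 + 3 \<le> n k2"
  by (rule chain_gap[OF gaps])

lemma n_inj: "inj_on n {..s}"
proof (rule inj_onI)
  fix a b assume "a \<in> {..s}" "b \<in> {..s}" "n a = n b"
  then show "a = b" using n_lt[of a b] n_lt[of b a] by (cases a b rule: linorder_cases) auto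
qed

lemma n_nonadj: "k1 \<le> s \<Longrightarrow> k2 \<le> s \<Longrightarrow> n k1 \<noteq> Suc (n k2)"
  using n_lt[of k1 k2] n_lt[of k2 k1] by (cases k1 k2 rule: linorder_cases) auto

lemma code_bilin:
  fixes A :: fop and g :: "nat \<Rightarrow> complex"
  assumes K: "K1 \<subseteq> {..s}" "K2 \<subseteq> {..s}"
    and Ad: "\<forall>k1\<in>K1. \<forall>k2\<in>K2. A (n k1) (n k2) = (if k1 = k2 then g (n k1) else 0)"
  shows "(\<Sum>i\<le>M. cnj (\<Sum>k\<in>K1. complex_of_real (sqrt (x k)) * fock (n k) i)
            * (\<Sum>j\<le>M. A i j * (\<Sum>k\<in>K2. complex_of_real (sqrt (x k)) * fock (n k) j)))
        = (\<Sum>k\<in>K1 \<inter> K2. complex_of_real (x k) * g (n k))"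
proof -
  have fin: "finite K1" "finite K2" using K finite_subset by auto
  have inj: "inj_on n (K1 \<union> K2)" by (rule inj_on_subset[OF n_inj]) (use K in auto)
  have le: "\<forall>k\<in>K1 \<union> K2. n k \<le> M" using nk_le_M by auto
  have "(\<Sum>i\<le>M. cnj (\<Sum>k\<in>K1. complex_of_real (sqrt (x k)) * fock (n k) i)
            * (\<Sum>j\<le>M. A i j * (\<Sum>k\<in>K2. complex_of_real (sqrt (x k)) * fock (n k) j)))
      = (\<Sum>k\<in>K1 \<inter> K2. cnj (complex_of_real (sqrt (x k))) * complex_of_real (sqrt (x k)) * g (n k))"
    by (rule bilin_fock[OF fin inj le Ad])
  also have "\<dots> = (\<Sum>k\<in>K1 \<inter> K2. complex_of_real (x k) * g (n k))"
  proof (intro sum.cong refl)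
    fix k assume "k \<in> K1 \<inter> K2"
    then have "0 \<le> x k" using K xpos by auto
    then show "cnj (complex_of_real (sqrt (x k))) * complex_of_real (sqrt (x k)) * g (n k)
        = complex_of_real (x k) * g (n k)"
      by (simp flip: of_real_mult)
  qed
  finally show ?thesis .
qed

lemma finner_alt: "finner M u v = (\<Sum>i\<le>M. cnj (u i) * (\<Sum>j\<le>M. idop M i j * v j))"
proof -
  have "(\<Sum>j\<le>M. idop M i j * v j) = v i" if "i \<le> M" for i
  proof -
    have "(\<Sum>j\<le>M. idop M i j * v j) = (\<Sum>j\<le>M. if i = j then v j else 0)"
      by (intro sum.cong) (auto simp: idop_def that)
    then show ?thesis using that by simp
  qed
  then show ?thesis unfolding finner_def by (intro sum.cong refl) simp
qed

lemma melem_alt: "melem M u A v = (\<Sum>i\<le>M. cnj (u i) * (\<Sum>j\<le>M. A i j * v j))"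
  by (simp add: melem_def finner_def mvec_def)

lemma sums: "(\<Sum>k\<in>Ev. x k) = 1" "(\<Sum>k\<in>Od. x k) = 1"
proof -
  have a: "(\<Sum>k\<le>s. x k) = 2" and b: "(\<Sum>k\<le>s. (-1)^k * x k) = 0" using ls by (auto simp: linsys_def)
  show "(\<Sum>k\<in>Ev. x k) = 1" "(\<Sum>k\<in>Od. x k) = 1"
    using a b split_even_odd[of x s] by auto
qed

lemma EO: "Ev \<inter> Od = {}" "Ev \<inter> Ev = Ev" "Od \<inter> Od = Od" "Od \<inter> Ev = {}" by auto

lemma Ad_idop: "\<forall>k1\<in>K1. \<forall>k2\<in>K2. idop M (n k1) (n k2) = (if k1 = k2 then (\<lambda>_. 1) (n k1) else 0)"
  if "K1 \<subseteq> {..s}" "K2 \<subseteq> {..s}"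
  using that n_inj nk_le_M by (auto simp: idop_def inj_on_def)

lemma Ad_mpow: "\<forall>k1\<in>K1. \<forall>k2\<in>K2. mpow M (numop M) l (n k1) (n k2) = (if k1 = k2 then (\<lambda>m. (of_nat m)^l) (n k1) else 0)"
  if "K1 \<subseteq> {..s}" "K2 \<subseteq> {..s}"
  using that n_inj nk_le_M by (auto simp: mpow_numop inj_on_def)

lemma Ksub: "Ev \<subseteq> {..s}" "Od \<subseteq> {..s}" by auto

lemma c0_def': "code0 M s x = (\<lambda>m. \<Sum>k\<in>Ev. complex_of_real (sqrt (x k)) * fock (n k) m)"
  by (simp add: code0_def)
lemma c1_def': "code1 M s x = (\<lambda>m. \<Sum>k\<in>Od. complex_of_real (sqrt (x k)) * fock (n k) m)"
  by (simp add: code1_def)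

lemma norms:
  "finner M (code0 M s x) (code0 M s x) = 1"
  "finner M (code1 M s x) (code1 M s x) = 1"
  "finner M (code0 M s x) (code1 M s x) = 0"
proof -
  have "finner M (code0 M s x) (code0 M s x) = (\<Sum>k\<in>Ev \<inter> Ev. complex_of_real (x k) * 1)"
    unfolding finner_alt c0_def' by (rule code_bilin[OF Ksub(1) Ksub(1) Ad_idop[OF Ksub(1) Ksub(1)]])
  then show "finner M (code0 M s x) (code0 M s x) = 1" using sums by (simp flip: of_real_sum)
  have "finner M (code1 M s x) (code1 M s x) = (\<Sum>k\<in>Od \<inter> Od. complex_of_real (x k) * 1)"
    unfolding finner_alt c1_def' by (rule code_bilin[OF Ksub(2) Ksub(2) Ad_idop[OF Ksub(2) Ksub(2)]])
  then show "finner M (code1 M s x) (code1 M s x) = 1" using sums by (simp flip: of_real_sum)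
  have "finner M (code0 M s x) (code1 M s x) = (\<Sum>k\<in>Ev \<inter> Od. complex_of_real (x k) * 1)"
    unfolding finner_alt c0_def' c1_def' by (rule code_bilin[OF Ksub(1) Ksub(2) Ad_idop[OF Ksub(1) Ksub(2)]])
  then show "finner M (code0 M s x) (code1 M s x) = 0" by (simp add: EO)
qed

lemma melems:
  "melem M (code0 M s x) (mpow M (numop M) s) (code1 M s x) = 0"
  "melem M (code0 M s x) (mpow M (numop M) s) (code0 M s x)
     - melem M (code1 M s x) (mpow M (numop M) s) (code1 M s x)
     = complex_of_real (\<Sum>k\<le>s. (-1)^k * x k * real (nk M s k) ^ s)"
proof -
  have "melem M (code0 M s x) (mpow M (numop M) s) (code1 M s x) = (\<Sum>k\<in>Ev \<inter> Od. complex_of_real (x k) * (of_nat (n k))^s)"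
    unfolding melem_alt c0_def' c1_def' by (rule code_bilin[OF Ksub(1) Ksub(2) Ad_mpow[OF Ksub(1) Ksub(2)]])
  then show "melem M (code0 M s x) (mpow M (numop M) s) (code1 M s x) = 0" by (simp add: EO)
  have e: "melem M (code0 M s x) (mpow M (numop M) s) (code0 M s x) = (\<Sum>k\<in>Ev \<inter> Ev. complex_of_real (x k) * (of_nat (n k))^s)"
    unfolding melem_alt c0_def' by (rule code_bilin[OF Ksub(1) Ksub(1) Ad_mpow[OF Ksub(1) Ksub(1)]])
  have o: "melem M (code1 M s x) (mpow M (numop M) s) (code1 M s x) = (\<Sum>k\<in>Od \<inter> Od. complex_of_real (x k) * (of_nat (n k))^s)"
    unfolding melem_alt c1_def' by (rule code_bilin[OF Ksub(2) Ksub(2) Ad_mpow[OF Ksub(2) Ksub(2)]])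
  have "(\<Sum>k\<le>s. (-1)^k * (x k * real (nk M s k) ^ s)) = (\<Sum>k\<in>Ev. x k * real (nk M s k) ^ s) - (\<Sum>k\<in>Od. x k * real (nk M s k) ^ s)"
    by (rule split_even_odd(2))
  then show "melem M (code0 M s x) (mpow M (numop M) s) (code0 M s x)
     - melem M (code1 M s x) (mpow M (numop M) s) (code1 M s x)
     = complex_of_real (\<Sum>k\<le>s. (-1)^k * x k * real (nk M s k) ^ s)"
    unfolding e o EO by (simp add: mult.assoc)
qed

lemma PSP:
  assumes SF: "S \<in> frakS M s"
  shows "\<exists>r::real. \<forall>i\<le>M. \<forall>j\<le>M.
              mmul M (codeP M s x) (mmul M S (codeP M s x)) i j
                = complex_of_real r * codeP M s x i j"
proof -
  obtain r0 c where Sf: "\<And>i j. i \<le> M \<Longrightarrow> j \<le> M \<Longrightarrow> i \<noteq> Suc j \<Longrightarrow> j \<noteq> Suc i \<Longrightarrow>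
       S i j = (if i = j then complex_of_real (r0 + (\<Sum>l\<in>{1..s-1}. c l * real i ^ l)) else 0)"
    using frakS_form[OF SF] by blast
  define h where "h m = r0 + (\<Sum>l\<in>{1..s-1}. c l * real m ^ l)" for m :: nat
  have AdS: "\<forall>k1\<in>K1. \<forall>k2\<in>K2. S (n k1) (n k2) = (if k1 = k2 then (\<lambda>m. complex_of_real (h m)) (n k1) else 0)"
    if "K1 \<subseteq> {..s}" "K2 \<subseteq> {..s}" for K1 K2
  proof (intro ballI)
    fix k1 k2 assume k: "k1 \<in> K1" "k2 \<in> K2"
    then have kk: "k1 \<le> s" "k2 \<le> s" using that by auto
    show "S (n k1) (n k2) = (if k1 = k2 then (\<lambda>m. complex_of_real (h m)) (n k1) else 0)"
      using Sf[OF nk_le_M nk_le_M n_nonadj[OF kk] n_nonadj[OF kk(2,1)]] n_inj kk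
      by (auto simp: h_def inj_on_def)
  qed
  define Q where "Q = (\<lambda>u v. \<Sum>k\<le>M. \<Sum>l\<le>M. cnj (u k) * S k l * v l)"
  have Qalt: "Q u v = (\<Sum>i\<le>M. cnj (u i) * (\<Sum>j\<le>M. S i j * v j))" for u v
    by (simp add: Q_def sum_distrib_left mult.assoc)
  have Q00: "Q (code0 M s x) (code0 M s x) = (\<Sum>k\<in>Ev \<inter> Ev. complex_of_real (x k) * complex_of_real (h (n k)))"
    unfolding Qalt c0_def' by (rule code_bilin[OF Ksub(1) Ksub(1) AdS[OF Ksub(1) Ksub(1)]])
  have Q11: "Q (code1 M s x) (code1 M s x) = (\<Sum>k\<in>Od \<inter> Od. complex_of_real (x k) * complex_of_real (h (n k)))"
    unfolding Qalt c1_def' by (rule code_bilin[OF Ksub(2) Ksub(2) AdS[OF Ksub(2) Ksub(2)]])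
  have Q01: "Q (code0 M s x) (code1 M s x) = (\<Sum>k\<in>Ev \<inter> Od. complex_of_real (x k) * complex_of_real (h (n k)))"
    unfolding Qalt c0_def' c1_def' by (rule code_bilin[OF Ksub(1) Ksub(2) AdS[OF Ksub(1) Ksub(2)]])
  have Q10: "Q (code1 M s x) (code0 M s x) = (\<Sum>k\<in>Od \<inter> Ev. complex_of_real (x k) * complex_of_real (h (n k)))"
    unfolding Qalt c0_def' c1_def' by (rule code_bilin[OF Ksub(2) Ksub(1) AdS[OF Ksub(2) Ksub(1)]])
  have hz: "(\<Sum>k\<le>s. (-1)^k * (x k * h (n k))) = 0"
  proof -
    have "(\<Sum>k\<le>s. (-1)^k * (x k * h (n k)))
        = r0 * (\<Sum>k\<le>s. (-1)^k * x k) + (\<Sum>l\<in>{1..s-1}. c l * (\<Sum>k\<le>s. (-1)^k * x k * real (nk M s k) ^ l))"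
      by (simp add: h_def sum_distrib_left sum_distrib_right sum.distrib algebra_simps) (rule sum.swap)
    also have "\<dots> = 0" using ls by (simp add: linsys_def)
    finally show ?thesis .
  qed
  define r where "r = (\<Sum>k\<in>Ev. x k * h (n k))"
  have rO: "(\<Sum>k\<in>Od. x k * h (n k)) = r"
    using hz split_even_odd(2)[of "\<lambda>k. x k * h (n k)" s] by (simp add: r_def)
  have q00: "Q (code0 M s x) (code0 M s x) = complex_of_real r"
    unfolding Q00 EO r_def by (simp flip: of_real_mult of_real_sum)
  have q11: "Q (code1 M s x) (code1 M s x) = complex_of_real r"
    unfolding Q11 EO rO[symmetric] by (simp flip: of_real_mult of_real_sum)
  have q01: "Q (code0 M s x) (code1 M s x) = 0" unfolding Q01 EO by simp
  have q10: "Q (code1 M s x) (code0 M s x) = 0" unfolding Q10 EO by simp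
  show ?thesis
  proof (intro exI allI impI)
    fix i j
    have e00: "(\<Sum>k\<le>M. \<Sum>l\<le>M. cnj (code0 M s x k) * S k l * code0 M s x l) = complex_of_real r"
      using q00 by (simp add: Q_def)
    have e11: "(\<Sum>k\<le>M. \<Sum>l\<le>M. cnj (code1 M s x k) * S k l * code1 M s x l) = complex_of_real r"
      using q11 by (simp add: Q_def)
    have e01: "(\<Sum>k\<le>M. \<Sum>l\<le>M. cnj (code0 M s x k) * S k l * code1 M s x l) = 0"
      using q01 by (simp add: Q_def)
    have e10: "(\<Sum>k\<le>M. \<Sum>l\<le>M. cnj (code1 M s x k) * S k l * code0 M s x l) = 0"
      using q10 by (simp add: Q_def)
    show "mmul M (codeP M s x) (mmul M S (codeP M s x)) i j = complex_of_real r * codeP M s x i j"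
      unfolding codeP_def PSP_expand e00 e11 e01 e10
      by (simp add: outer_def algebra_simps)
  qed
qed

end

lemma const_id:
  assumes s2: "s \<ge> 2"
  shows "(2 / lcs s) / ((-1)^s * 4 powr (1 - real s)) = 1"
proof -
  obtain m where m: "s = Suc m" using s2 by (cases s) auto
  have p: "(4::real) powr (1 - real s) = 1 / 4 ^ m"
    by (simp add: m powr_minus powr_realpow divide_inverse)
  have l: "lcs s = - 2 * ((-1)^m * 4 ^ m)" using m by (simp add: lcs_def power_mult_distrib[symmetric])
  show ?thesis unfolding p l using neg1_sq[of m] by (simp add: m field_simps)
qed

lemma Lsq: "s \<ge> 2 \<Longrightarrow> ((2 * 4 ^ s / 4) / lcs s)\<^sup>2 = (1::real)"
proof -
  assume s2: "s \<ge> 2"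
  obtain m where m: "s = Suc m" using s2 by (cases s) auto
  have l: "lcs s = - 2 * ((-1)^m * 4 ^ m)" using m by (simp add: lcs_def power_mult_distrib[symmetric])
  have n2: "((-1::real)^m)\<^sup>2 = 1" using neg1_sq[of m] by (simp add: power2_eq_square)
  show ?thesis unfolding l using n2 by (simp add: m power_divide power_mult_distrib field_simps)
qed

lemma eps_formula:
  assumes s2: "s \<ge> 2" and k: "k \<le> s"
  shows "2 * eps s k / real s = 2 / real s - (if k = 0 then 1 / real s else 0) - (if k = s then 1 / real s else 0)"
  using s2 k by (auto simp: eps_def field_simps)


lemma ratio_bounds:
  fixes d f k :: real
  assumes a: "\<bar>d\<bar> \<le> 2 * f" and b: "f \<le> k / 2" and c: "d \<noteq> 0"
  shows "(d / k)\<^sup>2 \<le> d\<^sup>2 / (4 * f\<^sup>2)" "d\<^sup>2 / (4 * f\<^sup>2) \<le> 1"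
        "(d / k)\<^sup>2 \<le> 4 * f\<^sup>2 / k\<^sup>2" "4 * f\<^sup>2 / k\<^sup>2 \<le> 1"
proof -
  have f0: "f > 0" using a c by (smt (verit) abs_not_less_zero abs_le_zero_iff)
  have k0: "k > 0" using f0 b by linarith
  have s1: "d\<^sup>2 \<le> 4 * f\<^sup>2"
  proof -
    have "\<bar>d\<bar>\<^sup>2 \<le> (2 * f)\<^sup>2" using a by (intro power_mono) auto
    then show ?thesis by (simp add: power_mult_distrib)
  qed
  have s2: "4 * f\<^sup>2 \<le> k\<^sup>2"
  proof -
    have "(2 * f)\<^sup>2 \<le> k\<^sup>2" using b f0 by (intro power_mono) auto
    then show ?thesis by (simp add: power_mult_distrib)
  qed
  have p4: "4 * f\<^sup>2 > 0" using f0 by simp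
  show "(d / k)\<^sup>2 \<le> d\<^sup>2 / (4 * f\<^sup>2)"
    unfolding power_divide by (rule divide_left_mono[OF s2]) (use p4 f0 k0 in \<open>auto intro!: mult_pos_pos\<close>)
  show "d\<^sup>2 / (4 * f\<^sup>2) \<le> 1" using s1 p4 by simp
  show "(d / k)\<^sup>2 \<le> 4 * f\<^sup>2 / k\<^sup>2"
    unfolding power_divide using s1 k0 by (intro divide_right_mono) simp_all
  show "4 * f\<^sup>2 / k\<^sup>2 \<le> 1" using s2 k0 by simp
qed

theorem mainTheorem9:
  fixes s :: nat and t :: real
  assumes hs: "s \<ge> 2" and ht: "t \<noteq> 0"
  shows "(\<exists>M0::nat. \<exists>x :: nat \<Rightarrow> nat \<Rightarrow> real.
      (\<forall>M\<ge>M0.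
          \<comment> \<open>(i)\<close>
          (\<forall>k<s. nk M s k < nk M s (k+1) \<and> nk M s (k+1) \<ge> nk M s k + 3)
          \<comment> \<open>(ii)\<close>
        \<and> linsys M s (x M)
        \<and> (\<forall>y. linsys M s y \<longrightarrow> (\<forall>k\<le>s. y k = x M k))
        \<and> (\<forall>k\<le>s. x M k > 0)
          \<comment> \<open>(iii)\<close>
        \<and> finner M (code0 M s (x M)) (code0 M s (x M)) = 1
        \<and> finner M (code1 M s (x M)) (code1 M s (x M)) = 1
        \<and> finner M (code0 M s (x M)) (code1 M s (x M)) = 0
        \<and> (\<forall>S\<in>frakS M s. \<exists>r::real. \<forall>i\<le>M. \<forall>j\<le>M.
              mmul M (codeP M s (x M)) (mmul M S (codeP M s (x M))) i j
                = complex_of_real r * codeP M s (x M) i j)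
          \<comment> \<open>(iv)\<close>
        \<and> melem M (code0 M s (x M)) (mpow M (numop M) s) (code1 M s (x M)) = 0)
    \<and> (\<forall>k\<le>s. (\<lambda>M. x M k) \<longlonglongrightarrow>
          2 / real s - (if k = 0 then 1 / real s else 0) - (if k = s then 1 / real s else 0))
    \<and> (\<lambda>M. (melem M (code0 M s (x M)) (mpow M (numop M) s) (code0 M s (x M))
              - melem M (code1 M s (x M)) (mpow M (numop M) s) (code1 M s (x M)))
            / complex_of_real ((-1)^s * (real M)^s * 4 powr (1 - real s))) \<longlonglongrightarrow> 1
    \<and> (\<lambda>M. t\<^sup>2 * (Re (melem M (code0 M s (x M)) (mpow M (numop M) s) (code0 M s (x M))
              - melem M (code1 M s (x M)) (mpow M (numop M) s) (code1 M s (x M))))\<^sup>2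
            / (4 * t\<^sup>2 * (INF S\<in>frakS M s. opnorm M (\<lambda>i j. mpow M (numop M) s i j - S i j))\<^sup>2))
        \<longlonglongrightarrow> 1
    \<and> asymp_equiv (\<lambda>M. t\<^sup>2 * (Re (melem M (code0 M s (x M)) (mpow M (numop M) s) (code0 M s (x M))
              - melem M (code1 M s (x M)) (mpow M (numop M) s) (code1 M s (x M))))\<^sup>2)
        sequentially (\<lambda>M. 16 * t\<^sup>2 * (real M / 4)^(2 * s))
    \<and> asymp_equiv (\<lambda>M. 4 * t\<^sup>2 * (INF S\<in>frakS M s. opnorm M (\<lambda>i j. mpow M (numop M) s i j - S i j))\<^sup>2)
        sequentially (\<lambda>M. 16 * t\<^sup>2 * (real M / 4)^(2 * s)))
  \<and> (\<forall>M::nat. M \<ge> 1 \<longrightarrow>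
       2 * (INF S\<in>frakS M s. opnorm M (\<lambda>i j. mpow M (numop M) s i j - S i j)) \<le> 4 * (real M / 4)^s)"
proof -
  have s0: "s > 0" using hs by simp
  define y where "y M k = real (nk M s k) / real M" for M k
  define G where "G M = (\<Sum>j\<le>s. (-1)^j / Dn (y M) s j)" for M
  define x where "x M k = 2 * (-1)^k / (Dn (y M) s k * G M)" for M k
  define dR where "dR M = 2 * real M ^ s / G M" for M
  define K where "K M = 4 * (real M / 4) ^ s" for M :: nat
  define F where "F M = Fm M s" for M
  define D where "D M = melem M (code0 M s (x M)) (mpow M (numop M) s) (code0 M s (x M))
              - melem M (code1 M s (x M)) (mpow M (numop M) s) (code1 M s (x M))" for M
  have hy: "((\<lambda>M. y M k) \<longlongrightarrow> unode s k) sequentially" for k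
    unfolding y_def by (rule y_tendsto)
  have hD: "((\<lambda>M. Dn (y M) s k) \<longlongrightarrow> Dn (unode s) s k) sequentially" if "k \<le> s" for k
    by (rule Dn_tendsto[OF hy that])
  have hDnz: "Dn (unode s) s k \<noteq> 0" if "k \<le> s" for k
    by (rule Dn_nonzero[OF u_inj[OF s0] that])
  have hG: "(G \<longlongrightarrow> lcs s) sequentially"
  proof -
    have "((\<lambda>M. \<Sum>j\<le>s. (-1)^j / Dn (y M) s j) \<longlongrightarrow> (\<Sum>j\<le>s. (-1)^j / Dn (unode s) s j)) sequentially"
      by (intro tendsto_sum tendsto_divide tendsto_const hD hDnz) auto
    then show ?thesis unfolding G_def[abs_def] Gu[OF s0] .
  qed
  have hx: "((\<lambda>M. x M k) \<longlongrightarrow> 2 * eps s k / real s) sequentially" if k: "k \<le> s" for k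
  proof -
    have "((\<lambda>M. x M k) \<longlongrightarrow> 2 * (-1)^k / (Dn (unode s) s k * lcs s)) sequentially"
      unfolding x_def
      by (intro tendsto_divide tendsto_mult tendsto_const hD hG k) (use hDnz[OF k] lcs_nz[of s] in simp)
    moreover have "2 * (-1)^k / (Dn (unode s) s k * lcs s) = 2 * eps s k / real s"
    proof -
      have "2 * (-1)^k / (Dn (unode s) s k * lcs s) = 2 * (-1)^k * (1 / Dn (unode s) s k) / lcs s"
        by simp
      also have "\<dots> = 2 * eps s k / real s * ((-1)^k * (-1)^k) * (lcs s / lcs s)"
        unfolding inv_Dn_u[OF s0 k] by (simp add: field_simps)
      finally show ?thesis using neg1_sq[of k] lcs_nz[of s] by simp
    qed
    ultimately show ?thesis by simp
  qed
  have ev_gap: "eventually (\<lambda>M. \<forall>k<s. nk M s k + 3 \<le> nk M s (Suc k)) sequentially"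
  proof -
    have "eventually (\<lambda>M. \<forall>k\<in>{..<s}. nk M s k + 3 \<le> nk M s (Suc k)) sequentially"
      by (rule eventually_ball_finite) (auto intro: nk_gap_eventually[OF s0])
    then show ?thesis by (rule eventually_mono) auto
  qed
  have ev_M: "eventually (\<lambda>M::nat. M > 0) sequentially" by (rule eventually_gt_at_top)
  have ev_G: "eventually (\<lambda>M. G M \<noteq> 0) sequentially"
    by (rule tendsto_imp_eventually_ne[OF hG lcs_nz])
  have ev_x: "eventually (\<lambda>M. \<forall>k\<le>s. x M k > 0) sequentially"
  proof -
    have "eventually (\<lambda>M. \<forall>k\<in>{..s}. x M k > 0) sequentially"
    proof (rule eventually_ball_finite, simp, intro ballI)
      fix k assume "k \<in> {..s}"
      then have k: "k \<le> s" by simp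
      have "0 < 2 * eps s k / real s" using s0 by (simp add: eps_def)
      then show "eventually (\<lambda>M. x M k > 0) sequentially" by (rule order_tendstoD(1)[OF hx[OF k]])
    qed
    then show ?thesis by (rule eventually_mono) auto
  qed
  have perM: "linsys M s (x M) \<and> (\<forall>y'. linsys M s y' \<longrightarrow> (\<forall>k\<le>s. y' k = x M k))
      \<and> (\<Sum>k\<le>s. (-1)^k * x M k * real (nk M s k) ^ s) = dR M"
    if gap: "\<forall>k<s. nk M s k + 3 \<le> nk M s (Suc k)" and M0: "M > 0" and G0: "G M \<noteq> 0" for M
  proof -
    have injn: "inj_on (nk M s) {..s}"
    proof (rule inj_onI)
      fix a b assume "a \<in> {..s}" "b \<in> {..s}" "nk M s a = nk M s b"
      then show "a = b" using chain_gap[OF gap, of a b] chain_gap[OF gap, of b a]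
        by (cases a b rule: linorder_cases) auto
    qed
    have inj: "inj_on (y M) {..s}"
      using injn M0 unfolding y_def inj_on_def by (auto simp: divide_cancel_right)
    have Mr: "real M > 0" using M0 by simp
    have my: "real M * y M k = real (nk M s k)" for k using M0 by (simp add: y_def)
    note sl = sol_lemma[OF s0 Mr inj, folded G_def, OF G0]
    have sl1: "\<forall>i<s. (\<Sum>k\<le>s. (-1)^k * x M k * real (nk M s k) ^ i) = 0"
      using sl(1) unfolding my x_def[symmetric] by (simp add: x_def)
    have sl2: "(\<Sum>k\<le>s. x M k) = 2" using sl(2) by (simp add: x_def)
    have sl3: "(\<Sum>k\<le>s. (-1)^k * x M k * real (nk M s k) ^ s) = dR M"
      using sl(3) unfolding my by (simp add: x_def dR_def)
    have ls: "linsys M s (x M)" using linsys_iff[OF s0] sl1 sl2 by simp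
    have un: "\<forall>y'. linsys M s y' \<longrightarrow> (\<forall>k\<le>s. y' k = x M k)"
    proof (rule allI, rule impI)
      fix y' assume "linsys M s y'"
      then have h1: "\<forall>i<s. (\<Sum>k\<le>s. (-1)^k * y' k * (real M * y M k) ^ i) = 0" and h2: "(\<Sum>k\<le>s. y' k) = 2"
        using linsys_iff[OF s0] unfolding my by auto
      show "\<forall>k\<le>s. y' k = x M k" using sl(4)[OF h1 h2] by (simp add: x_def)
    qed
    show ?thesis using ls un sl3 by blast
  qed
  have ev_all: "eventually (\<lambda>M. (\<forall>k<s. nk M s k + 3 \<le> nk M s (Suc k)) \<and> M > 0 \<and> G M \<noteq> 0 \<and> (\<forall>k\<le>s. x M k > 0)) sequentially"
    using ev_gap ev_M ev_G ev_x by eventually_elim auto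
  have good: "(\<forall>k<s. nk M s k < nk M s (k+1) \<and> nk M s (k+1) \<ge> nk M s k + 3)
        \<and> linsys M s (x M)
        \<and> (\<forall>y. linsys M s y \<longrightarrow> (\<forall>k\<le>s. y k = x M k))
        \<and> (\<forall>k\<le>s. x M k > 0)
        \<and> finner M (code0 M s (x M)) (code0 M s (x M)) = 1
        \<and> finner M (code1 M s (x M)) (code1 M s (x M)) = 1
        \<and> finner M (code0 M s (x M)) (code1 M s (x M)) = 0
        \<and> (\<forall>S\<in>frakS M s. \<exists>r::real. \<forall>i\<le>M. \<forall>j\<le>M.
              mmul M (codeP M s (x M)) (mmul M S (codeP M s (x M))) i j
                = complex_of_real r * codeP M s (x M) i j)
        \<and> melem M (code0 M s (x M)) (mpow M (numop M) s) (code1 M s (x M)) = 0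
        \<and> D M = complex_of_real (dR M)
        \<and> \<bar>dR M\<bar> \<le> 2 * F M \<and> F M \<le> K M / 2 \<and> dR M \<noteq> 0"
    if A: "(\<forall>k<s. nk M s k + 3 \<le> nk M s (Suc k)) \<and> M > 0 \<and> G M \<noteq> 0 \<and> (\<forall>k\<le>s. x M k > 0)" for M
  proof -
    have gap: "\<forall>k<s. nk M s k + 3 \<le> nk M s (Suc k)" and M0: "M > 0" and G0: "G M \<noteq> 0"
      and xp: "\<forall>k\<le>s. x M k > 0" using A by auto
    have pm: "linsys M s (x M)" "\<forall>y'. linsys M s y' \<longrightarrow> (\<forall>k\<le>s. y' k = x M k)"
      "(\<Sum>k\<le>s. (-1)^k * x M k * real (nk M s k) ^ s) = dR M"
      using perM[OF gap M0 G0] by blast+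
    have xnn: "\<forall>k\<le>s. 0 \<le> x M k" using xp by (simp add: less_imp_le)
    interpret cl: codeloc M s "x M" using hs gap pm(1) xnn by unfold_locales auto
    have Dd: "D M = complex_of_real (dR M)" unfolding D_def cl.melems(2) pm(3) ..
    have low: "\<bar>dR M\<bar> \<le> 2 * F M" using Fm_lower[OF hs pm(1) xnn] pm(3) unfolding F_def by simp
    have up: "F M \<le> K M / 2" using Fm_upper[OF hs, of M] M0 unfolding F_def K_def by simp
    have dnz: "dR M \<noteq> 0" using M0 G0 by (simp add: dR_def)
    have g1: "\<forall>k<s. nk M s k < nk M s (k+1) \<and> nk M s (k+1) \<ge> nk M s k + 3" using gap by auto
    show ?thesis
      using g1 pm(1) pm(2) xp cl.norms cl.melems(1) cl.PSP Dd low up dnz by (intro conjI) blast+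

  qed
  obtain M0 where M0: "\<And>M. M \<ge> M0 \<Longrightarrow> (\<forall>k<s. nk M s k + 3 \<le> nk M s (Suc k)) \<and> M > 0 \<and> G M \<noteq> 0 \<and> (\<forall>k\<le>s. x M k > 0)"
    using ev_all unfolding eventually_sequentially by blast
  have ev2: "eventually (\<lambda>M. D M = complex_of_real (dR M) \<and> \<bar>dR M\<bar> \<le> 2 * F M \<and> F M \<le> K M / 2
      \<and> dR M \<noteq> 0 \<and> M > 0 \<and> G M \<noteq> 0) sequentially"
    using ev_all by (rule eventually_mono) (frule good, blast)
  define rho where "rho M = dR M / K M" for M
  have rho_ev: "eventually (\<lambda>M. (2 * 4 ^ s / 4) / G M = rho M) sequentially"
    using ev2
  proof (rule eventually_mono)
    fix M assume a: "D M = complex_of_real (dR M) \<and> \<bar>dR M\<bar> \<le> 2 * F M \<and> F M \<le> K M / 2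
      \<and> dR M \<noteq> 0 \<and> M > 0 \<and> G M \<noteq> 0"
    then have M0': "real M > 0" by simp
    show "(2 * 4 ^ s / 4) / G M = rho M"
      using M0' by (simp add: rho_def dR_def K_def power_divide field_simps)
  qed
  have hrho2: "((\<lambda>M. (rho M)\<^sup>2) \<longlongrightarrow> 1) sequentially"
  proof -
    have "((\<lambda>M. ((2 * 4 ^ s / 4) / G M)\<^sup>2) \<longlongrightarrow> ((2 * 4 ^ s / 4) / lcs s)\<^sup>2) sequentially"
      by (intro tendsto_power tendsto_divide tendsto_const hG lcs_nz)
    then have "((\<lambda>M. ((2 * 4 ^ s / 4) / G M)\<^sup>2) \<longlongrightarrow> 1) sequentially" using Lsq[OF hs] by simp
    then show ?thesis
      by (rule Lim_transform_eventually) (use rho_ev in \<open>auto elim: eventually_mono\<close>)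
  qed
  have L3: "((\<lambda>M. D M / complex_of_real ((-1)^s * (real M)^s * 4 powr (1 - real s))) \<longlongrightarrow> 1) sequentially"
  proof -
    have c0: "(-1)^s * (4::real) powr (1 - real s) \<noteq> 0" by simp
    have "((\<lambda>M. complex_of_real ((2 / G M) / ((-1)^s * 4 powr (1 - real s)))) \<longlongrightarrow>
           complex_of_real ((2 / lcs s) / ((-1)^s * 4 powr (1 - real s)))) sequentially"
      by (intro tendsto_of_real tendsto_divide tendsto_const hG lcs_nz c0)
    then have lim: "((\<lambda>M. complex_of_real ((2 / G M) / ((-1)^s * 4 powr (1 - real s)))) \<longlongrightarrow> 1) sequentially"
      unfolding const_id[OF hs] of_real_1 .
    show ?thesis
    proof (rule Lim_transform_eventually[OF lim])
      show "eventually (\<lambda>M. complex_of_real ((2 / G M) / ((-1)^s * 4 powr (1 - real s)))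
          = D M / complex_of_real ((-1)^s * (real M)^s * 4 powr (1 - real s))) sequentially"
        using ev2
      proof (rule eventually_mono)
        fix M assume a: "D M = complex_of_real (dR M) \<and> \<bar>dR M\<bar> \<le> 2 * F M \<and> F M \<le> K M / 2
          \<and> dR M \<noteq> 0 \<and> M > 0 \<and> G M \<noteq> 0"
        then have M0': "real M > 0" and DD: "D M = complex_of_real (dR M)" by auto
        have "(2 / G M) / ((-1)^s * 4 powr (1 - real s)) = dR M / ((-1)^s * (real M)^s * 4 powr (1 - real s))"
          using M0' by (simp add: dR_def field_simps)
        then show "complex_of_real ((2 / G M) / ((-1)^s * 4 powr (1 - real s)))
          = D M / complex_of_real ((-1)^s * (real M)^s * 4 powr (1 - real s))"
          unfolding DD by (simp only: of_real_divide)
      qed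
    qed
  qed
  have KK: "16 * t\<^sup>2 * (real M / 4) ^ (2 * s) = t\<^sup>2 * (K M)\<^sup>2" for M
    by (simp add: K_def power_mult_distrib power_mult[symmetric] mult.commute)
  have L4: "((\<lambda>M. t\<^sup>2 * (Re (D M))\<^sup>2 / (4 * t\<^sup>2 * (F M)\<^sup>2)) \<longlongrightarrow> 1) sequentially"
  proof (rule real_tendsto_sandwich[OF _ _ hrho2 tendsto_const])
    show "eventually (\<lambda>M. (rho M)\<^sup>2 \<le> t\<^sup>2 * (Re (D M))\<^sup>2 / (4 * t\<^sup>2 * (F M)\<^sup>2)) sequentially"
      using ev2 by (rule eventually_mono) (use ht in \<open>auto simp: rho_def dest: ratio_bounds(1)\<close>)
    show "eventually (\<lambda>M. t\<^sup>2 * (Re (D M))\<^sup>2 / (4 * t\<^sup>2 * (F M)\<^sup>2) \<le> 1) sequentially"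
      using ev2 by (rule eventually_mono) (use ht in \<open>auto dest: ratio_bounds(2)\<close>)
  qed
  have L5: "((\<lambda>M. t\<^sup>2 * (Re (D M))\<^sup>2 / (16 * t\<^sup>2 * (real M / 4) ^ (2 * s))) \<longlongrightarrow> 1) sequentially"
  proof (rule Lim_transform_eventually[OF hrho2])
    show "eventually (\<lambda>M. (rho M)\<^sup>2 = t\<^sup>2 * (Re (D M))\<^sup>2 / (16 * t\<^sup>2 * (real M / 4) ^ (2 * s))) sequentially"
      using ev2 by (rule eventually_mono) (use ht in \<open>unfold KK, auto simp: rho_def power_divide\<close>)
  qed
  have L6: "((\<lambda>M. 4 * t\<^sup>2 * (F M)\<^sup>2 / (16 * t\<^sup>2 * (real M / 4) ^ (2 * s))) \<longlongrightarrow> 1) sequentially"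
  proof (rule real_tendsto_sandwich[OF _ _ hrho2 tendsto_const])
    show "eventually (\<lambda>M. (rho M)\<^sup>2 \<le> 4 * t\<^sup>2 * (F M)\<^sup>2 / (16 * t\<^sup>2 * (real M / 4) ^ (2 * s))) sequentially"
      using ev2 by (rule eventually_mono) (use ht in \<open>auto simp: KK rho_def dest: ratio_bounds(3)\<close>)
    show "eventually (\<lambda>M. 4 * t\<^sup>2 * (F M)\<^sup>2 / (16 * t\<^sup>2 * (real M / 4) ^ (2 * s)) \<le> 1) sequentially"
      using ev2 by (rule eventually_mono) (use ht in \<open>auto simp: KK dest: ratio_bounds(4)\<close>)
  qed
  have part1: "\<forall>M\<ge>M0.
          (\<forall>k<s. nk M s k < nk M s (k+1) \<and> nk M s (k+1) \<ge> nk M s k + 3)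
        \<and> linsys M s (x M)
        \<and> (\<forall>y. linsys M s y \<longrightarrow> (\<forall>k\<le>s. y k = x M k))
        \<and> (\<forall>k\<le>s. x M k > 0)
        \<and> finner M (code0 M s (x M)) (code0 M s (x M)) = 1
        \<and> finner M (code1 M s (x M)) (code1 M s (x M)) = 1
        \<and> finner M (code0 M s (x M)) (code1 M s (x M)) = 0
        \<and> (\<forall>S\<in>frakS M s. \<exists>r::real. \<forall>i\<le>M. \<forall>j\<le>M.
              mmul M (codeP M s (x M)) (mmul M S (codeP M s (x M))) i j
                = complex_of_real r * codeP M s (x M) i j)
        \<and> melem M (code0 M s (x M)) (mpow M (numop M) s) (code1 M s (x M)) = 0"
  proof (intro allI impI)
    fix M assume "M \<ge> M0"
    from good[OF M0[OF this]] show "(\<forall>k<s. nk M s k < nk M s (k+1) \<and> nk M s (k+1) \<ge> nk M s k + 3)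
        \<and> linsys M s (x M)
        \<and> (\<forall>y. linsys M s y \<longrightarrow> (\<forall>k\<le>s. y k = x M k))
        \<and> (\<forall>k\<le>s. x M k > 0)
        \<and> finner M (code0 M s (x M)) (code0 M s (x M)) = 1
        \<and> finner M (code1 M s (x M)) (code1 M s (x M)) = 1
        \<and> finner M (code0 M s (x M)) (code1 M s (x M)) = 0
        \<and> (\<forall>S\<in>frakS M s. \<exists>r::real. \<forall>i\<le>M. \<forall>j\<le>M.
              mmul M (codeP M s (x M)) (mmul M S (codeP M s (x M))) i j
                = complex_of_real r * codeP M s (x M) i j)
        \<and> melem M (code0 M s (x M)) (mpow M (numop M) s) (code1 M s (x M)) = 0"
      by (elim conjE) (intro conjI; assumption)
  qed
  have part2: "\<forall>k\<le>s. (\<lambda>M. x M k) \<longlonglongrightarrow>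
          2 / real s - (if k = 0 then 1 / real s else 0) - (if k = s then 1 / real s else 0)"
    using hx eps_formula[OF hs] by simp
  have part6: "\<forall>M::nat. M \<ge> 1 \<longrightarrow> 2 * Fm M s \<le> 4 * (real M / 4)^s"
    using Fm_upper[OF hs] by fastforce
  show ?thesis
    apply (intro conjI exI[of _ M0] exI[of _ x])
    subgoal by (rule part1)
    subgoal by (rule part2)
    subgoal using L3 unfolding D_def .
    subgoal using L4 unfolding D_def F_def .
    subgoal by (rule asymp_equivI') (use L5 in \<open>unfold D_def\<close>)
    subgoal by (rule asymp_equivI') (use L6 in \<open>unfold F_def\<close>)
    subgoal by (rule part6)
    done
qed

end
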